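(* Let $D$ be an integral domain and $\star$ a semistar operation on $D$. The following are equivalent: (i) $D$ is a P$\star$MD; (ii) for every overring $T$ of $D$ and every semistar operation $\star'$ on $T$ such that $T$ is $(\star,\star')$-linked to $D$, $T$ is $(\star,\star')$-flat over $D$; (iii) for every overring $T$ of $D$, $T$ is $(\star,\ell_{\star,T})$-flat over $D$; (iv) every overring of $D$ that is $t$-linked to $(D,\star)$ is $t$-flat over $(D,\star)$; (v) every overring $T$ of $D$ that is $(\star,d_T)$-linked to $D$ is $(\star,d_T)$-flat over $D$.
   Context: Let $D$ be an integral domain with quotient field $K$. $\overline{\mathbf F}(D)$ denotes the set of all nonzero $D$-submodules of $K$ and $\mathbf f(D)$ the set of nonzero finitely generated $D$-submodules of $K$. A semistar operation on $D$ is a map $\star:\overline{\mathbf F}(D)\to\overline{\mathbf F}(D)$, $E\mapsto E^\star$, such that for all $0\ne x\in K$ and $E,F\in\overline{\mathbf F}(D)$: (1) $(xE)^\star=xE^\star$; (2) $E\subseteq F\Rightarrow E^\star\subseteq F^\star$; (3) $E\subseteq E^\star$ and $(E^\star)^\star=E^\star$. $\star_f$ is defined by $E^{\star_f}=\bigcup\{F^\star:F\in\mathbf f(D),F\subseteq E\}$. A nonzero ideal $I$ of $D$ is a quasi-$\star$-ideal if $I^\star\cap D=I$; a quasi-$\star$-prime is a prime quasi-$\star$-ideal. An overring of $D$ is a ring $T$ with $D\subseteq T\subseteq K$; the same notions are defined on $T$. $d_T$ is the identity operation on $T$; $v_T$ is $E\mapsto(T:_K(T:_KE))$ and $t_T:=(v_T)_f$.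 $T$ is $(\star,\star')$-linked to $D$ if for every nonzero finitely generated ideal $F\subseteq D$ with $F^\star=D^\star$ one has $(FT)^{\star'}=T^{\star'}$; $T$ is $t$-linked to $(D,\star)$ if it is $(\star,t_T)$-linked to $D$. $T$ is $(\star,\star')$-flat over $D$ if it is $(\star,\star')$-linked to $D$ and $D_{Q\cap D}=T_Q$ for every quasi-$\star'_f$-prime ideal $Q$ of $T$; $T$ is $t$-flat over $(D,\star)$ if it is $(\star,t_T)$-flat over $D$. The semistar operation $\ell_{\star,T}$ on $T$ is $E^{\ell_{\star,T}}=\bigcap\{ET_{D\setminus P}:P$ a quasi-$\star_f$-prime of $D\}$ (equal to $K$ if there are none). $D$ is a P$\star$MD if every $F\in\mathbf f(D)$ satisfies $(FF^{-1})^{\star_f}=D^\star$, where $F^{-1}=(D:_KF)$. *)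

theory Defs
  imports Main
begin

text \<open>The quotient field K is modelled as the whole type 'a :: field; the domain D
  (and its overrings) are subsets of 'a.\<close>

definition subring :: "'a::field set \<Rightarrow> bool" where
  "subring R \<longleftrightarrow> 0 \<in> R \<and> 1 \<in> R \<and> (\<forall>x\<in>R. \<forall>y\<in>R. x + y \<in> R \<and> - x \<in> R \<and> x * y \<in> R)"

definition domain_qf :: "'a::field set \<Rightarrow> bool" where
  "domain_qf D \<longleftrightarrow> subring D \<and> (\<forall>x. \<exists>a\<in>D. \<exists>b\<in>D. b \<noteq> 0 \<and> x = a / b)"

definition overring :: "'a::field set \<Rightarrow> 'a set \<Rightarrow> bool" where
  "overring D T \<longleftrightarrow> subring T \<and> D \<subseteq> T"

definition submod :: "'a::field set \<Rightarrow> 'a set \<Rightarrow> bool" where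
  "submod R E \<longleftrightarrow> 0 \<in> E \<and> (\<forall>x\<in>E. \<forall>y\<in>E. x + y \<in> E) \<and> (\<forall>r\<in>R. \<forall>x\<in>E. r * x \<in> E)"

definition Fbar :: "'a::field set \<Rightarrow> 'a set set" where
  "Fbar R = {E. submod R E \<and> E \<noteq> {0}}"

definition span :: "'a::field set \<Rightarrow> 'a set \<Rightarrow> 'a set" where
  "span R S = \<Inter>{E. submod R E \<and> S \<subseteq> E}"

definition fgen :: "'a::field set \<Rightarrow> 'a set set" where
  "fgen R = {E \<in> Fbar R. \<exists>S. finite S \<and> E = span R S}"

definition semistar :: "'a::field set \<Rightarrow> ('a set \<Rightarrow> 'a set) \<Rightarrow> bool" where
  "semistar R st \<longleftrightarrow>
     (\<forall>E\<in>Fbar R. st E \<in> Fbar R) \<and>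
     (\<forall>x E. x \<noteq> 0 \<longrightarrow> E \<in> Fbar R \<longrightarrow> st ((\<lambda>y. x * y) ` E) = (\<lambda>y. x * y) ` st E) \<and>
     (\<forall>E F. E \<in> Fbar R \<longrightarrow> F \<in> Fbar R \<longrightarrow> E \<subseteq> F \<longrightarrow> st E \<subseteq> st F) \<and>
     (\<forall>E\<in>Fbar R. E \<subseteq> st E \<and> st (st E) = st E)"

definition star_f :: "'a::field set \<Rightarrow> ('a set \<Rightarrow> 'a set) \<Rightarrow> 'a set \<Rightarrow> 'a set" where
  "star_f R st E = \<Union>{st F | F. F \<in> fgen R \<and> F \<subseteq> E}"

definition ideal_of :: "'a::field set \<Rightarrow> 'a set \<Rightarrow> bool" where
  "ideal_of R I \<longleftrightarrow> I \<subseteq> R \<and> submod R I"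

definition quasi_ideal :: "'a::field set \<Rightarrow> ('a set \<Rightarrow> 'a set) \<Rightarrow> 'a set \<Rightarrow> bool" where
  "quasi_ideal R st I \<longleftrightarrow> ideal_of R I \<and> I \<noteq> {0} \<and> st I \<inter> R = I"

definition quasi_prime :: "'a::field set \<Rightarrow> ('a set \<Rightarrow> 'a set) \<Rightarrow> 'a set \<Rightarrow> bool" where
  "quasi_prime R st P \<longleftrightarrow> quasi_ideal R st P \<and> P \<noteq> R \<and>
     (\<forall>a\<in>R. \<forall>b\<in>R. a * b \<in> P \<longrightarrow> a \<in> P \<or> b \<in> P)"

definition loc :: "'a::field set \<Rightarrow> 'a set \<Rightarrow> 'a set" where
  "loc R S = {a / s | a s. a \<in> R \<and> s \<in> S}"

definition colon :: "'a::field set \<Rightarrow> 'a set \<Rightarrow> 'a set" where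
  "colon R E = {x. \<forall>e\<in>E. x * e \<in> R}"

definition v_op :: "'a::field set \<Rightarrow> 'a set \<Rightarrow> 'a set" where
  "v_op T E = colon T (colon T E)"

definition t_op :: "'a::field set \<Rightarrow> 'a set \<Rightarrow> 'a set" where
  "t_op T = star_f T (v_op T)"

definition d_op :: "'a::field set \<Rightarrow> 'a set" where
  "d_op E = E"

definition linked :: "'a::field set \<Rightarrow> ('a set \<Rightarrow> 'a set) \<Rightarrow> 'a set \<Rightarrow> ('a set \<Rightarrow> 'a set) \<Rightarrow> bool" where
  "linked D st T st' \<longleftrightarrow>
     (\<forall>F. F \<in> fgen D \<and> F \<subseteq> D \<and> st F = st D \<longrightarrow> st' (span T F) = st' T)"

definition flat :: "'a::field set \<Rightarrow> ('a set \<Rightarrow> 'a set) \<Rightarrow> 'a set \<Rightarrow> ('a set \<Rightarrow> 'a set) \<Rightarrow> bool" where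
  "flat D st T st' \<longleftrightarrow> linked D st T st' \<and>
     (\<forall>Q. quasi_prime T (star_f T st') Q \<longrightarrow> loc D (D - (Q \<inter> D)) = loc T (T - Q))"

text \<open>ell_{st,T}: E T_{D\P} is the T_{D\P}-submodule generated by E; empty intersection is K = UNIV\<close>
definition ell :: "'a::field set \<Rightarrow> ('a set \<Rightarrow> 'a set) \<Rightarrow> 'a set \<Rightarrow> 'a set \<Rightarrow> 'a set" where
  "ell D st T E = \<Inter>{span (loc T (D - P)) E | P. quasi_prime D (star_f D st) P}"

definition PstarMD :: "'a::field set \<Rightarrow> ('a set \<Rightarrow> 'a set) \<Rightarrow> bool" where
  "PstarMD D st \<longleftrightarrow>
     (\<forall>F\<in>fgen D. star_f D st (span D {x * y | x y. x \<in> F \<and> y \<in> colon D F}) = st D)"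

end

theory Submission
  imports Defs
begin


lemma subringD:
  assumes "subring R"
  shows "0 \<in> R" "1 \<in> R" "x \<in> R \<Longrightarrow> y \<in> R \<Longrightarrow> x + y \<in> R"
    "x \<in> R \<Longrightarrow> - x \<in> R" "x \<in> R \<Longrightarrow> y \<in> R \<Longrightarrow> x * y \<in> R"
    "x \<in> R \<Longrightarrow> y \<in> R \<Longrightarrow> x - y \<in> R"
  using assms unfolding subring_def
  by (auto, metis diff_conv_add_uminus)

lemma subring_power: "subring R \<Longrightarrow> x \<in> R \<Longrightarrow> x ^ n \<in> R"
  by (induction n) (simp_all add: subringD)

lemma subring_prod: "subring R \<Longrightarrow> (\<And>i. i \<in> A \<Longrightarrow> f i \<in> R) \<Longrightarrow> prod f A \<in> R"
  by (induction A rule: infinite_finite_induct) (simp_all add: subringD)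

lemma subring_sum: "subring R \<Longrightarrow> (\<And>i. i \<in> A \<Longrightarrow> f i \<in> R) \<Longrightarrow> sum f A \<in> R"
  by (induction A rule: infinite_finite_induct) (simp_all add: subringD)

lemma submodD:
  assumes "submod R E"
  shows "0 \<in> E" "x \<in> E \<Longrightarrow> y \<in> E \<Longrightarrow> x + y \<in> E" "r \<in> R \<Longrightarrow> x \<in> E \<Longrightarrow> r * x \<in> E"
  using assms unfolding submod_def by auto

lemma submod_neg: "submod R E \<Longrightarrow> subring R \<Longrightarrow> x \<in> E \<Longrightarrow> - x \<in> E"
proof -
  assume a: "submod R E" "subring R" "x \<in> E"
  have "- 1 \<in> R" using subringD(2,4)[OF a(2)] by blast
  from submodD(3)[OF a(1) this a(3)] show ?thesis by simp
qed

lemma submod_diff: "submod R E \<Longrightarrow> subring R \<Longrightarrow> x \<in> E \<Longrightarrow> y \<in> E \<Longrightarrow> x - y \<in> E"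
  using submod_neg[of R E y] submodD(2)[of R E x "-y"] by auto

lemma submod_sum: "submod R E \<Longrightarrow> (\<And>i. i \<in> A \<Longrightarrow> f i \<in> E) \<Longrightarrow> sum f A \<in> E"
  by (induction A rule: infinite_finite_induct) (simp_all add: submodD)

lemma submod_mono_ring: "submod R E \<Longrightarrow> R' \<subseteq> R \<Longrightarrow> submod R' E"
  unfolding submod_def by blast

lemma subring_submod: "subring R \<Longrightarrow> submod R R"
  unfolding subring_def submod_def by blast

lemma submod_Inter: "(\<And>E. E \<in> \<E> \<Longrightarrow> submod R E) \<Longrightarrow> submod R (\<Inter>\<E>)"
  unfolding submod_def by blast

lemma submod_Int: "submod R E \<Longrightarrow> submod R F \<Longrightarrow> submod R (E \<inter> F)"
  unfolding submod_def by blast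

lemma submod_UNIV: "submod R UNIV"
  unfolding submod_def by blast

lemma submod_span: "submod R (span R S)"
  unfolding span_def by (rule submod_Inter) auto

lemma span_sub: "S \<subseteq> span R S"
  unfolding span_def by blast

lemma span_least: "submod R E \<Longrightarrow> S \<subseteq> E \<Longrightarrow> span R S \<subseteq> E"
  unfolding span_def by blast

lemma span_mono: "S \<subseteq> S' \<Longrightarrow> span R S \<subseteq> span R S'"
  by (meson order.trans span_least span_sub submod_span)

lemma span_mono_ring: "R \<subseteq> R' \<Longrightarrow> span R S \<subseteq> span R' S"
  by (meson span_least span_sub submod_mono_ring submod_span)

lemma span_idem: "submod R E \<Longrightarrow> span R E = E"
  by (simp add: span_least span_sub subset_antisym)

lemma span_mult_in: "x \<in> span R S \<Longrightarrow> r \<in> R \<Longrightarrow> r * x \<in> span R S"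
  using submodD(3)[OF submod_span] by blast

lemma span_empty: "span R {} = {0}"
proof -
  have "submod R {0}" unfolding submod_def by auto
  hence "span R {} \<subseteq> {0}" by (rule span_least) auto
  moreover have "0 \<in> span R {}" using submodD(1)[OF submod_span] .
  ultimately show ?thesis by auto
qed

lemma span_zero_set: "S \<subseteq> {0} \<Longrightarrow> span R S = {0}"
proof -
  assume "S \<subseteq> {0}"
  have "submod R {0}" unfolding submod_def by auto
  hence "span R S \<subseteq> {0}" using \<open>S \<subseteq> {0}\<close> by (rule span_least)
  moreover have "0 \<in> span R S" using submodD(1)[OF submod_span] .
  ultimately show ?thesis by auto
qed

lemma span_nonzero: "x \<in> S \<Longrightarrow> x \<noteq> 0 \<Longrightarrow> span R S \<noteq> {0}"
  using span_sub by blast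

lemma span_scale_sub: "(\<lambda>y. b * y) ` span R S \<subseteq> span R ((\<lambda>y. b * y) ` S)"
proof -
  have "submod R {y. b * y \<in> span R ((\<lambda>y. b * y) ` S)}"
    unfolding submod_def
  proof (intro conjI ballI)
    show "0 \<in> {y. b * y \<in> span R ((\<lambda>y. b * y) ` S)}" using submodD(1)[OF submod_span] by simp
  next
    fix x y assume "x \<in> {y. b * y \<in> span R ((\<lambda>y. b * y) ` S)}" "y \<in> {y. b * y \<in> span R ((\<lambda>y. b * y) ` S)}"
    thus "x + y \<in> {y. b * y \<in> span R ((\<lambda>y. b * y) ` S)}"
      using submodD(2)[OF submod_span] by (simp add: distrib_left)
  next
    fix r x assume "r \<in> R" "x \<in> {y. b * y \<in> span R ((\<lambda>y. b * y) ` S)}"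
    thus "r * x \<in> {y. b * y \<in> span R ((\<lambda>y. b * y) ` S)}"
      using span_mult_in by (metis mem_Collect_eq mult.left_commute)
  qed
  moreover have "S \<subseteq> {y. b * y \<in> span R ((\<lambda>y. b * y) ` S)}" using span_sub by blast
  ultimately have "span R S \<subseteq> {y. b * y \<in> span R ((\<lambda>y. b * y) ` S)}" by (rule span_least)
  thus ?thesis by blast
qed

lemma Fbar_iff: "E \<in> Fbar R \<longleftrightarrow> submod R E \<and> (\<exists>x\<in>E. x \<noteq> 0)"
  unfolding Fbar_def using submodD(1) by fastforce

lemma fgen_span: "finite S \<Longrightarrow> x \<in> S \<Longrightarrow> x \<noteq> 0 \<Longrightarrow> span R S \<in> fgen R"
  unfolding fgen_def Fbar_iff using submod_span span_sub by blast

lemma fgen_Fbar: "F \<in> fgen R \<Longrightarrow> F \<in> Fbar R"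
  unfolding fgen_def by auto

lemma fgenE: "F \<in> fgen R \<Longrightarrow> (\<And>S. finite S \<Longrightarrow> F = span R S \<Longrightarrow> submod R F \<Longrightarrow> F \<noteq> {0} \<Longrightarrow> thesis) \<Longrightarrow> thesis"
  unfolding fgen_def Fbar_def by auto

lemma fgen_single: "x \<noteq> 0 \<Longrightarrow> span R {x} \<in> fgen R"
  by (rule fgen_span) auto



lemma ssD:
  assumes "semistar R st"
  shows "E \<in> Fbar R \<Longrightarrow> st E \<in> Fbar R"
    "x \<noteq> 0 \<Longrightarrow> E \<in> Fbar R \<Longrightarrow> st ((\<lambda>y. x * y) ` E) = (\<lambda>y. x * y) ` st E"
    "E \<in> Fbar R \<Longrightarrow> F \<in> Fbar R \<Longrightarrow> E \<subseteq> F \<Longrightarrow> st E \<subseteq> st F"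
    "E \<in> Fbar R \<Longrightarrow> E \<subseteq> st E"
    "E \<in> Fbar R \<Longrightarrow> st (st E) = st E"
  using assms unfolding semistar_def
  by (simp_all only: Ball_def) (metis (no_types))+

lemma ss_submod: "semistar R st \<Longrightarrow> E \<in> Fbar R \<Longrightarrow> submod R (st E)"
  using ssD(1) unfolding Fbar_def by blast

lemma ss_least: "semistar R st \<Longrightarrow> E \<in> Fbar R \<Longrightarrow> F \<in> Fbar R \<Longrightarrow> E \<subseteq> st F \<Longrightarrow> st E \<subseteq> st F"
  by (metis ssD(1,3,5))

lemma subring_Fbar: "subring R \<Longrightarrow> R \<in> Fbar R"
  unfolding Fbar_iff using subring_submod subringD(2) one_neq_zero by metis

lemma subring_fgen: "subring R \<Longrightarrow> R \<in> fgen R"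
proof -
  assume R: "subring R"
  have "span R {1} = R"
  proof
    show "span R {1} \<subseteq> R" by (rule span_least[OF subring_submod[OF R]]) (simp add: subringD(2)[OF R])
    show "R \<subseteq> span R {1}" using span_mult_in[of 1 R "{1}"] span_sub by fastforce
  qed
  thus ?thesis using fgen_single[of 1 R] by simp
qed

lemma one_in_st: "semistar R st \<Longrightarrow> subring R \<Longrightarrow> 1 \<in> st R"
  using ssD(4)[of R st R] subring_Fbar subringD(2) by blast

lemma submod_contains_ring: "submod R E \<Longrightarrow> 1 \<in> E \<Longrightarrow> R \<subseteq> E"
  using submodD(3)[of R E _ 1] by fastforce

lemma st_eq_of_one:
  assumes "semistar R st" "subring R" "G \<in> Fbar R" "G \<subseteq> R" "1 \<in> st G"
  shows "st G = st R"
proof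
  show "st G \<subseteq> st R" using ssD(3)[OF assms(1) assms(3) subring_Fbar[OF assms(2)] assms(4)] .
  have "R \<subseteq> st G" using submod_contains_ring[OF ss_submod[OF assms(1,3)] assms(5)] .
  thus "st R \<subseteq> st G" using ss_least[OF assms(1) subring_Fbar[OF assms(2)] assms(3)] by blast
qed

lemma Fbar_scale:
  assumes "E \<in> Fbar R" "b \<noteq> 0" shows "(\<lambda>y. b * y) ` E \<in> Fbar R"
proof -
  have sm: "submod R E" and ex: "\<exists>x\<in>E. x \<noteq> 0" using assms(1) unfolding Fbar_iff by auto
  have "submod R ((\<lambda>y. b * y) ` E)" unfolding submod_def
  proof (intro conjI ballI)
    show "0 \<in> (\<lambda>y. b * y) ` E" using submodD(1)[OF sm] by force
  next
    fix x y assume "x \<in> (\<lambda>y. b * y) ` E" "y \<in> (\<lambda>y. b * y) ` E"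
    then obtain x' y' where "x' \<in> E" "y' \<in> E" "x = b * x'" "y = b * y'" by blast
    thus "x + y \<in> (\<lambda>y. b * y) ` E" using submodD(2)[OF sm] by (metis distrib_left image_eqI)
  next
    fix r x assume "r \<in> R" "x \<in> (\<lambda>y. b * y) ` E"
    then obtain x' where "x' \<in> E" "x = b * x'" by blast
    thus "r * x \<in> (\<lambda>y. b * y) ` E" using submodD(3)[OF sm \<open>r \<in> R\<close>] by (metis mult.left_commute image_eqI)
  qed
  moreover have "\<exists>x\<in>(\<lambda>y. b * y) ` E. x \<noteq> 0" using ex assms(2) by auto
  ultimately show ?thesis unfolding Fbar_iff by blast
qed

lemma star_f_iff: "x \<in> star_f R st E \<longleftrightarrow> (\<exists>G\<in>fgen R. G \<subseteq> E \<and> x \<in> st G)"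
  unfolding star_f_def by blast

lemma star_f_mono: "E \<subseteq> E' \<Longrightarrow> star_f R st E \<subseteq> star_f R st E'"
  unfolding star_f_def by blast

lemma star_f_ext:
  assumes "semistar R st" "submod R E" "x \<in> E" "y \<in> E" "y \<noteq> 0"
  shows "x \<in> star_f R st E"
proof (cases "x = 0")
  case True
  have G: "span R {y} \<in> fgen R" by (rule fgen_single) fact
  have "span R {y} \<subseteq> E" using span_least[OF assms(2)] assms(4) by simp
  moreover have "0 \<in> st (span R {y})" using ss_submod[OF assms(1) fgen_Fbar[OF G]] submodD(1) by blast
  ultimately show ?thesis using G True unfolding star_f_iff by blast
next
  case False
  have G: "span R {x} \<in> fgen R" by (rule fgen_single) fact
  have "span R {x} \<subseteq> E" using span_least[OF assms(2)] assms(3) by simp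
  moreover have "x \<in> st (span R {x})" using ssD(4)[OF assms(1) fgen_Fbar[OF G]] span_sub by blast
  ultimately show ?thesis using G unfolding star_f_iff by blast
qed

lemma star_f_sub: "semistar R st \<Longrightarrow> E \<in> Fbar R \<Longrightarrow> star_f R st E \<subseteq> st E"
  unfolding star_f_def using ssD(3) fgen_Fbar by blast

lemma fgen_directed:
  assumes "G1 \<in> fgen R" "G2 \<in> fgen R" "submod R M" "G1 \<subseteq> M" "G2 \<subseteq> M"
  shows "\<exists>G3\<in>fgen R. G1 \<subseteq> G3 \<and> G2 \<subseteq> G3 \<and> G3 \<subseteq> M"
proof -
  obtain S1 where S1: "finite S1" "G1 = span R S1" "G1 \<noteq> {0}" using assms(1) by (rule fgenE)
  obtain S2 where S2: "finite S2" "G2 = span R S2" using assms(2) by (rule fgenE)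
  obtain x where x: "x \<in> S1" "x \<noteq> 0"
    using S1 span_zero_set[of S1 R] by blast
  let ?G = "span R (S1 \<union> S2)"
  have "?G \<in> fgen R" using fgen_span[of "S1 \<union> S2" x R] S1 S2 x by auto
  moreover have "G1 \<subseteq> ?G" "G2 \<subseteq> ?G" using S1(2) S2(2) span_mono[of S1 "S1\<union>S2" R] span_mono[of S2 "S1 \<union> S2" R] by auto
  moreover have "?G \<subseteq> M" using span_least[OF assms(3)] assms(4,5) S1 S2 span_sub by (metis Un_subset_iff order.trans)
  ultimately show ?thesis by blast
qed

lemma star_f_finite:
  assumes "semistar R st" "submod R M" "m \<in> M" "m \<noteq> 0" "finite S" "S \<subseteq> star_f R st M"
  shows "\<exists>G\<in>fgen R. G \<subseteq> M \<and> S \<subseteq> st G"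
  using assms(5,6)
proof (induction S rule: finite_induct)
  case empty
  have "span R {m} \<in> fgen R" by (rule fgen_single) fact
  moreover have "span R {m} \<subseteq> M" using span_least[OF assms(2)] assms(3) by simp
  ultimately show ?case by blast
next
  case (insert x S)
  have "S \<subseteq> star_f R st M" "x \<in> star_f R st M" using insert.prems by auto
  then obtain G2 where G2: "G2 \<in> fgen R" "G2 \<subseteq> M" "S \<subseteq> st G2" using insert.IH by blast
  obtain G1 where G1: "G1 \<in> fgen R" "G1 \<subseteq> M" "x \<in> st G1" using \<open>x \<in> star_f R st M\<close> unfolding star_f_iff by blast
  obtain G3 where G3: "G3 \<in> fgen R" "G1 \<subseteq> G3" "G2 \<subseteq> G3" "G3 \<subseteq> M"
    using fgen_directed[OF G1(1) G2(1) assms(2) G1(2) G2(2)] by blast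
  have "st G1 \<subseteq> st G3" by (rule ssD(3)[OF assms(1) fgen_Fbar[OF G1(1)] fgen_Fbar[OF G3(1)] G3(2)])
  moreover have "st G2 \<subseteq> st G3" by (rule ssD(3)[OF assms(1) fgen_Fbar[OF G2(1)] fgen_Fbar[OF G3(1)] G3(3)])
  ultimately have "insert x S \<subseteq> st G3" using G1(3) G2(3) by blast
  thus ?case using G3(1,4) by blast
qed

lemma star_f_submod:
  assumes "semistar R st" "submod R M" "m \<in> M" "m \<noteq> 0"
  shows "submod R (star_f R st M)"
  unfolding submod_def
proof (intro conjI ballI)
  show "0 \<in> star_f R st M" using star_f_ext[OF assms(1,2) submodD(1)[OF assms(2)] assms(3,4)] .
next
  fix x y assume "x \<in> star_f R st M" "y \<in> star_f R st M"
  then obtain G where G: "G \<in> fgen R" "G \<subseteq> M" "{x,y} \<subseteq> st G"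
    using star_f_finite[OF assms, of "{x,y}"] by auto
  have "submod R (st G)" using ss_submod[OF assms(1) fgen_Fbar[OF G(1)]] .
  hence "x + y \<in> st G" using G(3) submodD(2) by auto
  thus "x + y \<in> star_f R st M" unfolding star_f_iff using G(1,2) by blast
next
  fix r x assume "r \<in> R" "x \<in> star_f R st M"
  then obtain G where G: "G \<in> fgen R" "G \<subseteq> M" "x \<in> st G" unfolding star_f_iff by blast
  have "submod R (st G)" using ss_submod[OF assms(1) fgen_Fbar[OF G(1)]] .
  hence "r * x \<in> st G" using G(3) submodD(3) \<open>r \<in> R\<close> by auto
  thus "r * x \<in> star_f R st M" unfolding star_f_iff using G(1,2) by blast
qed

lemma star_f_fgen: "semistar R st \<Longrightarrow> F \<in> fgen R \<Longrightarrow> star_f R st F = st F"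
  unfolding star_f_def using ssD(3) fgen_Fbar by blast

lemma one_star_f_eq:
  assumes "semistar R st" "subring R" "I \<subseteq> R" "1 \<in> star_f R st I"
  shows "star_f R st I = st R"
proof
  show "star_f R st I \<subseteq> st R" unfolding star_f_def using ssD(3)[OF assms(1)] fgen_Fbar
      subring_Fbar[OF assms(2)] assms(3) by blast
  obtain G where G: "G \<in> fgen R" "G \<subseteq> I" "1 \<in> st G" using assms(4) unfolding star_f_iff by blast
  have "st G = st R" using st_eq_of_one[OF assms(1,2) fgen_Fbar[OF G(1)]] G assms(3) by blast
  thus "st R \<subseteq> star_f R st I" using G unfolding star_f_def by blast
qed

lemma span_ring_ext:
  assumes "R \<subseteq> T" "F = span R S"
  shows "span T F = span T S"
proof
  have "F \<subseteq> span T S" unfolding assms(2)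
    by (rule span_least[OF submod_mono_ring[OF submod_span assms(1)] span_sub])
  thus "span T F \<subseteq> span T S" using span_least[OF submod_span] by blast
  show "span T S \<subseteq> span T F" using span_mono span_sub assms(2) by (metis span_least submod_span subset_trans)
qed

(* Existence of quasi-primes *)

lemma chain_finite:
  assumes "finite S" "S \<subseteq> \<Union>C" "C \<noteq> {}" "\<forall>x\<in>C. \<forall>y\<in>C. x \<subseteq> y \<or> y \<subseteq> x"
  shows "\<exists>I\<in>C. S \<subseteq> I"
  using assms(1,2)
proof (induction S rule: finite_induct)
  case empty thus ?case using assms(3) by blast
next
  case (insert x S)
  then obtain I where "I \<in> C" "S \<subseteq> I" by auto
  moreover obtain I' where "I' \<in> C" "x \<in> I'" using insert(4) by blast
  ultimately show ?case using assms(4) by (metis insert_subset subset_iff)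
qed



lemma ideal_ofD: "ideal_of R I \<Longrightarrow> I \<subseteq> R" "ideal_of R I \<Longrightarrow> submod R I"
  unfolding ideal_of_def by auto

lemma ext_one:
  assumes D: "subring D" and ss: "semistar D st"
    and Msub: "submod D M" "M \<subseteq> D" and JM: "J \<subseteq> M"
    and max: "\<forall>X. ideal_of D X \<and> J \<subseteq> X \<and> 1 \<notin> star_f D st X \<longrightarrow> M \<subseteq> X \<longrightarrow> X = M"
    and a: "a \<in> D" "a \<notin> M"
  shows "\<exists>Sa. finite Sa \<and> Sa \<subseteq> M \<and> 1 \<in> st (span D (insert a Sa))"
proof -
  define Ma where "Ma = {m + d * a | m d. m \<in> M \<and> d \<in> D}"
  have "submod D Ma" unfolding submod_def Ma_def
  proof (intro conjI ballI)
    show "0 \<in> {m + d * a | m d. m \<in> M \<and> d \<in> D}" using submodD(1)[OF Msub(1)] subringD(1)[OF D] by force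
  next
    fix x y assume "x \<in> {m + d * a | m d. m \<in> M \<and> d \<in> D}" "y \<in> {m + d * a | m d. m \<in> M \<and> d \<in> D}"
    then obtain m1 d1 m2 d2 where "x = m1 + d1 * a" "y = m2 + d2 * a" "m1 \<in> M" "m2 \<in> M" "d1 \<in> D" "d2 \<in> D" by blast
    moreover have "x + y = (m1 + m2) + (d1 + d2) * a" using calculation by (simp add: algebra_simps)
    ultimately show "x + y \<in> {m + d * a | m d. m \<in> M \<and> d \<in> D}"
      using submodD(2)[OF Msub(1)] subringD(3)[OF D] by blast
  next
    fix r x assume "r \<in> D" "x \<in> {m + d * a | m d. m \<in> M \<and> d \<in> D}"
    then obtain m1 d1 where "x = m1 + d1 * a" "m1 \<in> M" "d1 \<in> D" by blast
    moreover have "r * x = r * m1 + (r * d1) * a" using calculation by (simp add: algebra_simps)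
    ultimately show "r * x \<in> {m + d * a | m d. m \<in> M \<and> d \<in> D}"
      using submodD(3)[OF Msub(1)] subringD(5)[OF D] \<open>r \<in> D\<close> by blast
  qed
  moreover have "Ma \<subseteq> D"
  proof
    fix x assume "x \<in> Ma"
    then obtain m1 d1 where "x = m1 + d1 * a" "m1 \<in> M" "d1 \<in> D" unfolding Ma_def by blast
    thus "x \<in> D" using Msub(2) a(1) subringD(3,5)[OF D] by blast
  qed
  moreover have MMa: "M \<subseteq> Ma"
  proof
    fix x assume "x \<in> M" thus "x \<in> Ma" unfolding Ma_def using subringD(1)[OF D] by force
  qed
  moreover have "a \<in> Ma" unfolding Ma_def using submodD(1)[OF Msub(1)] subringD(2)[OF D] by force
  ultimately have "1 \<in> star_f D st Ma" using max JM a(2) unfolding ideal_of_def by blast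
  then obtain G where G: "G \<in> fgen D" "G \<subseteq> Ma" "1 \<in> st G" unfolding star_f_iff by blast
  obtain S where S: "finite S" "G = span D S" using G(1) by (rule fgenE)
  have "\<forall>s\<in>S. \<exists>m d. s = m + d * a \<and> m \<in> M \<and> d \<in> D"
    using S(2) span_sub G(2) unfolding Ma_def by blast
  then obtain mf df where mf: "\<forall>s\<in>S. s = mf s + df s * a \<and> mf s \<in> M \<and> df s \<in> D" by metis
  define Sa where "Sa = mf ` S"
  have Sa: "finite Sa" "Sa \<subseteq> M" using S(1) mf unfolding Sa_def by auto
  have "S \<subseteq> span D (insert a Sa)"
  proof
    fix s assume s: "s \<in> S"
    have "mf s \<in> insert a Sa" using s unfolding Sa_def by blast
    hence m1: "mf s \<in> span D (insert a Sa)" using span_sub by blast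
    have "a \<in> span D (insert a Sa)" using span_sub by blast
    hence m2: "df s * a \<in> span D (insert a Sa)" using span_mult_in mf s by blast
    have "mf s + df s * a \<in> span D (insert a Sa)" by (rule submodD(2)[OF submod_span m1 m2])
    thus "s \<in> span D (insert a Sa)" using mf s by metis
  qed
  hence "G \<subseteq> span D (insert a Sa)" using S(2) span_least[OF submod_span] by blast
  moreover have "a \<noteq> 0" using a(2) submodD(1)[OF Msub(1)] by auto
  hence "span D (insert a Sa) \<in> fgen D" using fgen_span[of "insert a Sa" a D] Sa by auto
  ultimately have "st G \<subseteq> st (span D (insert a Sa))" using ssD(3)[OF ss] fgen_Fbar G(1) by blast
  thus ?thesis using G(3) Sa by blast
qed

lemma exists_quasi_prime:
  assumes D: "subring D" and ss: "semistar D st" and J: "ideal_of D J" "j \<in> J" "j \<noteq> 0"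
    and one: "1 \<notin> star_f D st J"
  shows "\<exists>P. quasi_prime D (star_f D st) P \<and> J \<subseteq> P"
proof -
  define A where "A = {I. ideal_of D I \<and> J \<subseteq> I \<and> 1 \<notin> star_f D st I}"
  have "\<exists>M\<in>A. \<forall>X\<in>A. M \<subseteq> X \<longrightarrow> X = M"
  proof (rule subset_Zorn_nonempty)
    show "A \<noteq> {}" using J one unfolding A_def by blast
  next
    fix C assume C: "C \<noteq> {}" "subset.chain A C"
    hence CA: "C \<subseteq> A" and ch: "\<forall>x\<in>C. \<forall>y\<in>C. x \<subseteq> y \<or> y \<subseteq> x" by (auto simp: subset.chain_def)
    obtain I0 where I0: "I0 \<in> C" using C(1) by blast
    have CI: "\<And>I. I \<in> C \<Longrightarrow> ideal_of D I \<and> J \<subseteq> I \<and> 1 \<notin> star_f D st I" using CA unfolding A_def by blast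
    have "submod D (\<Union>C)" unfolding submod_def
    proof (intro conjI ballI)
      show "0 \<in> \<Union>C" using I0 CI[OF I0] submodD(1) ideal_ofD(2) by blast
    next
      fix x y assume "x \<in> \<Union>C" "y \<in> \<Union>C"
      then obtain I1 I2 where "I1 \<in> C" "I2 \<in> C" "x \<in> I1" "y \<in> I2" by blast
      moreover from this have "\<exists>I\<in>C. x \<in> I \<and> y \<in> I" using ch by blast
      then obtain I where "I \<in> C" "x \<in> I" "y \<in> I" by blast
      thus "x + y \<in> \<Union>C" using CI[OF \<open>I \<in> C\<close>] submodD(2) ideal_ofD(2) by blast
    next
      fix r x assume "r \<in> D" "x \<in> \<Union>C"
      then obtain I where "I \<in> C" "x \<in> I" by blast
      thus "r * x \<in> \<Union>C" using CI[OF \<open>I \<in> C\<close>] submodD(3) ideal_ofD(2) \<open>r \<in> D\<close> by blast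
    qed
    moreover have "\<Union>C \<subseteq> D" using CI ideal_ofD(1) by blast
    moreover have "J \<subseteq> \<Union>C" using CI I0 by blast
    moreover have "1 \<notin> star_f D st (\<Union>C)"
    proof
      assume "1 \<in> star_f D st (\<Union>C)"
      then obtain G where G: "G \<in> fgen D" "G \<subseteq> \<Union>C" "1 \<in> st G" unfolding star_f_iff by blast
      obtain S where S: "finite S" "G = span D S" using G(1) by (rule fgenE)
      have "S \<subseteq> \<Union>C" using S(2) span_sub G(2) by blast
      then obtain I where I: "I \<in> C" "S \<subseteq> I" using chain_finite[OF S(1) _ C(1) ch] by blast
      have "G \<subseteq> I" using S(2) span_least I CI[OF I(1)] ideal_ofD(2) by blast
      hence "1 \<in> star_f D st I" using G(1,3) unfolding star_f_iff by blast
      thus False using CI[OF I(1)] by blast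
    qed
    ultimately show "\<Union>C \<in> A" unfolding A_def ideal_of_def by blast
  qed
  then obtain M where M: "M \<in> A" and maxA: "\<forall>X\<in>A. M \<subseteq> X \<longrightarrow> X = M" by blast
  have Mi: "ideal_of D M" and JM: "J \<subseteq> M" and M1: "1 \<notin> star_f D st M" using M unfolding A_def by auto
  have Msub: "submod D M" "M \<subseteq> D" using Mi ideal_ofD by auto
  have jM: "j \<in> M" using JM J(2) by blast
  have max: "\<forall>X. ideal_of D X \<and> J \<subseteq> X \<and> 1 \<notin> star_f D st X \<longrightarrow> M \<subseteq> X \<longrightarrow> X = M"
    using maxA unfolding A_def by blast
  have sfM: "submod D (star_f D st M)" using star_f_submod[OF ss Msub(1) jM J(3)] .
  have quasi: "star_f D st M \<inter> D = M"
  proof -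
    define M' where "M' = star_f D st M \<inter> D"
    have MM': "M \<subseteq> M'" unfolding M'_def using star_f_ext[OF ss Msub(1) _ jM J(3)] Msub(2) by blast
    have "ideal_of D M'" unfolding ideal_of_def M'_def using submod_Int[OF sfM subring_submod[OF D]] by blast
    moreover have "J \<subseteq> M'" using JM MM' by blast
    moreover have "1 \<notin> star_f D st M'"
    proof
      assume "1 \<in> star_f D st M'"
      then obtain G where G: "G \<in> fgen D" "G \<subseteq> M'" "1 \<in> st G" unfolding star_f_iff by blast
      obtain S where S: "finite S" "G = span D S" using G(1) by (rule fgenE)
      have "S \<subseteq> star_f D st M" using S(2) span_sub G(2) unfolding M'_def by blast
      then obtain G' where G': "G' \<in> fgen D" "G' \<subseteq> M" "S \<subseteq> st G'"
        using star_f_finite[OF ss Msub(1) jM J(3) S(1)] by blast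
      have "G \<subseteq> st G'" using S(2) span_least[OF ss_submod[OF ss fgen_Fbar[OF G'(1)]] G'(3)] by blast
      hence "st G \<subseteq> st G'" using ss_least[OF ss fgen_Fbar[OF G(1)] fgen_Fbar[OF G'(1)]] by blast
      hence "1 \<in> star_f D st M" using G(3) G'(1,2) unfolding star_f_iff by blast
      thus False using M1 by blast
    qed
    ultimately have "M' = M" using max MM' by blast
    thus ?thesis unfolding M'_def .
  qed
  have MD: "M \<noteq> D"
  proof
    assume "M = D"
    hence "1 \<in> star_f D st M" using subring_fgen[OF D] one_in_st[OF ss D] unfolding star_f_iff by blast
    thus False using M1 by blast
  qed
  have prime: "\<forall>a\<in>D. \<forall>b\<in>D. a * b \<in> M \<longrightarrow> a \<in> M \<or> b \<in> M"
  proof (intro ballI impI, rule ccontr)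
    fix a b assume ab: "a \<in> D" "b \<in> D" "a * b \<in> M" "\<not> (a \<in> M \<or> b \<in> M)"
    obtain Sa where Sa: "finite Sa" "Sa \<subseteq> M" "1 \<in> st (span D (insert a Sa))"
      using ext_one[OF D ss Msub JM max ab(1)] ab(4) by blast
    obtain Sb where Sb: "finite Sb" "Sb \<subseteq> M" "1 \<in> st (span D (insert b Sb))"
      using ext_one[OF D ss Msub JM max ab(2)] ab(4) by blast
    have a0: "a \<noteq> 0" and b0: "b \<noteq> 0" using ab(4) submodD(1)[OF Msub(1)] by auto
    define A1 where "A1 = span D (insert a Sa)"
    define B1 where "B1 = span D (insert b Sb)"
    define CC where "CC = span D (insert (a * b) ((\<lambda>y. b * y) ` Sa \<union> Sb))"
    have A1f: "A1 \<in> fgen D" unfolding A1_def using fgen_span[of "insert a Sa" a D] Sa a0 by auto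
    have B1f: "B1 \<in> fgen D" unfolding B1_def using fgen_span[of "insert b Sb" b D] Sb b0 by auto
    have Cf: "CC \<in> fgen D" unfolding CC_def using fgen_span[of _ "a * b" D] Sa Sb a0 b0 by auto
    have "insert (a * b) ((\<lambda>y. b * y) ` Sa \<union> Sb) \<subseteq> M"
      using ab(3) Sa(2) Sb(2) submodD(3)[OF Msub(1) ab(2)] by blast
    hence CM: "CC \<subseteq> M" unfolding CC_def using span_least[OF Msub(1)] by blast
    have "(\<lambda>y. b * y) ` A1 \<subseteq> span D ((\<lambda>y. b * y) ` insert a Sa)" unfolding A1_def by (rule span_scale_sub)
    also have "\<dots> \<subseteq> CC" unfolding CC_def by (rule span_mono) (auto simp: mult.commute)
    finally have bA1: "(\<lambda>y. b * y) ` A1 \<subseteq> CC" .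
    have "1 \<in> st A1" using Sa(3) unfolding A1_def .
    hence "b * 1 \<in> (\<lambda>y. b * y) ` st A1" by (rule imageI)
    also have "\<dots> = st ((\<lambda>y. b * y) ` A1)" using ssD(2)[OF ss b0 fgen_Fbar[OF A1f]] by simp
    also have "\<dots> \<subseteq> st CC" using ssD(3)[OF ss Fbar_scale[OF fgen_Fbar[OF A1f] b0] fgen_Fbar[OF Cf] bA1] .
    finally have "b \<in> st CC" by simp
    moreover have "Sb \<subseteq> CC" unfolding CC_def using span_sub[of "insert (a*b) ((\<lambda>y. b*y)`Sa \<union> Sb)" D] by blast
    hence "Sb \<subseteq> st CC" using ssD(4)[OF ss fgen_Fbar[OF Cf]] by blast
    ultimately have "insert b Sb \<subseteq> st CC" by blast
    hence "B1 \<subseteq> st CC" unfolding B1_def by (rule span_least[OF ss_submod[OF ss fgen_Fbar[OF Cf]]])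
    hence "st B1 \<subseteq> st CC" using ss_least[OF ss fgen_Fbar[OF B1f] fgen_Fbar[OF Cf]] by blast
    hence "1 \<in> st CC" using Sb(3) unfolding B1_def by blast
    hence "1 \<in> star_f D st M" using Cf CM unfolding star_f_iff by blast
    thus False using M1 by blast
  qed
  have "quasi_prime D (star_f D st) M"
    unfolding quasi_prime_def quasi_ideal_def using Mi quasi MD prime jM J(3) by blast
  thus ?thesis using JM by blast
qed



definition Epoly :: "'a::field set \<Rightarrow> 'a \<Rightarrow> nat \<Rightarrow> 'a set" where
  "Epoly I x n = {\<Sum>i\<le>n. a i * x ^ i | a. \<forall>i. a i \<in> I}"

lemma EpolyI: "(\<And>i. a i \<in> I) \<Longrightarrow> y = (\<Sum>i\<le>n. a i * x ^ i) \<Longrightarrow> y \<in> Epoly I x n"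
  unfolding Epoly_def by blast

lemma EpolyD: "y \<in> Epoly I x n \<Longrightarrow> \<exists>a. (\<forall>i. a i \<in> I) \<and> y = (\<Sum>i\<le>n. a i * x ^ i)"
  unfolding Epoly_def by blast

lemma Epoly_0: "y \<in> Epoly I x 0 \<longleftrightarrow> y \<in> I"
proof
  assume "y \<in> Epoly I x 0" thus "y \<in> I" using EpolyD by fastforce
next
  assume "y \<in> I" thus "y \<in> Epoly I x 0" by (intro EpolyI[of "\<lambda>_. y"]) auto
qed

lemma Epoly_mono_Suc: "0 \<in> I \<Longrightarrow> Epoly I x k \<subseteq> Epoly I x (Suc k)"
proof
  fix y assume I0: "0 \<in> I" and "y \<in> Epoly I x k"
  then obtain a where a: "\<And>i. a i \<in> I" "y = (\<Sum>i\<le>k. a i * x ^ i)" using EpolyD by blast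
  define a' where "a' = a(Suc k := 0)"
  have "(\<Sum>i\<le>Suc k. a' i * x ^ i) = (\<Sum>i\<le>k. a' i * x ^ i)" by (simp add: a'_def)
  also have "\<dots> = y" unfolding a(2) by (rule sum.cong) (auto simp: a'_def)
  finally show "y \<in> Epoly I x (Suc k)" using a(1) I0 by (intro EpolyI[of a']) (auto simp: a'_def)
qed

lemma Epoly_mono: assumes "0 \<in> I" "k \<le> k'" shows "Epoly I x k \<subseteq> Epoly I x k'"
  using assms(2) by (induction rule: dec_induct) (use Epoly_mono_Suc[OF assms(1)] in blast)+

lemma Epoly_add:
  assumes "submod W I" "y \<in> Epoly I x k" "z \<in> Epoly I x k" shows "y + z \<in> Epoly I x k"
proof -
  obtain a where a: "\<And>i. a i \<in> I" "y = (\<Sum>i\<le>k. a i * x ^ i)" using EpolyD[OF assms(2)] by blast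
  obtain b where b: "\<And>i. b i \<in> I" "z = (\<Sum>i\<le>k. b i * x ^ i)" using EpolyD[OF assms(3)] by blast
  have "y + z = (\<Sum>i\<le>k. (a i + b i) * x ^ i)" unfolding a(2) b(2) by (simp add: sum.distrib distrib_right)
  thus ?thesis using submodD(2)[OF assms(1) a(1) b(1)] by (intro EpolyI) auto
qed

lemma Epoly_scale:
  assumes "submod W I" "w \<in> W" "y \<in> Epoly I x k" shows "w * y \<in> Epoly I x k"
proof -
  obtain a where a: "\<And>i. a i \<in> I" "y = (\<Sum>i\<le>k. a i * x ^ i)" using EpolyD[OF assms(3)] by blast
  have "w * y = (\<Sum>i\<le>k. (w * a i) * x ^ i)" unfolding a(2) by (simp add: sum_distrib_left mult.assoc)
  thus ?thesis using submodD(3)[OF assms(1) assms(2) a(1)] by (intro EpolyI) auto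
qed

lemma Epoly_neg:
  assumes "submod W I" "subring W" "y \<in> Epoly I x k" shows "- y \<in> Epoly I x k"
proof -
  have "- 1 \<in> W" using subringD(2,4)[OF assms(2)] by blast
  from Epoly_scale[OF assms(1) this assms(3)] show ?thesis by simp
qed

lemma Epoly_shift:
  assumes "0 \<in> I" "y \<in> Epoly I x k" shows "x * y \<in> Epoly I x (Suc k)"
proof -
  obtain a where a: "\<And>i. a i \<in> I" "y = (\<Sum>i\<le>k. a i * x ^ i)" using EpolyD[OF assms(2)] by blast
  define a' where "a' = (\<lambda>i. case i of 0 \<Rightarrow> 0 | Suc j \<Rightarrow> a j)"
  have "(\<Sum>i\<le>Suc k. a' i * x ^ i) = a' 0 * x ^ 0 + (\<Sum>i\<le>k. a' (Suc i) * x ^ Suc i)"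
    by (rule sum.atMost_Suc_shift)
  also have "\<dots> = x * y" unfolding a(2) by (simp add: a'_def sum_distrib_left mult.assoc mult.left_commute)
  finally show ?thesis using a(1) assms(1) by (intro EpolyI[of a']) (auto simp: a'_def split: nat.split)
qed

lemma Epoly_top:
  assumes "y \<in> Epoly I x (Suc k)" shows "\<exists>e\<in>Epoly I x k. \<exists>c\<in>I. y = e + c * x ^ Suc k"
proof -
  obtain a where a: "\<And>i. a i \<in> I" "y = (\<Sum>i\<le>Suc k. a i * x ^ i)" using EpolyD[OF assms] by blast
  have "y = (\<Sum>i\<le>k. a i * x ^ i) + a (Suc k) * x ^ Suc k" using a(2) by (simp only: sum.atMost_Suc)
  moreover have "(\<Sum>i\<le>k. a i * x ^ i) \<in> Epoly I x k" using a(1) by (intro EpolyI) auto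
  ultimately show ?thesis using a(1)[of "Suc k"] by (intro bexI)
qed

lemma Epoly_bot:
  assumes "y \<in> Epoly I x (Suc k)" shows "\<exists>c\<in>I. \<exists>e\<in>Epoly I x k. y = c + x * e"
proof -
  obtain a where a: "\<And>i. a i \<in> I" "y = (\<Sum>i\<le>Suc k. a i * x ^ i)" using EpolyD[OF assms] by blast
  have "y = a 0 * x ^ 0 + (\<Sum>i\<le>k. a (Suc i) * x ^ Suc i)" unfolding a(2) by (rule sum.atMost_Suc_shift)
  also have "\<dots> = a 0 + x * (\<Sum>i\<le>k. a (Suc i) * x ^ i)"
    by (simp add: sum_distrib_left mult.assoc mult.left_commute)
  finally have "y = a 0 + x * (\<Sum>i\<le>k. a (Suc i) * x ^ i)" .
  moreover have "(\<Sum>i\<le>k. a (Suc i) * x ^ i) \<in> Epoly I x k" using a(1) by (intro EpolyI) auto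
  ultimately show ?thesis using a(1)[of 0] by (intro bexI)
qed

lemma Epoly_monom:
  assumes "0 \<in> I" "c \<in> I" shows "c * x ^ n \<in> Epoly I x n"
proof -
  have "(\<Sum>i\<le>n. (if i = n then c else 0) * x ^ i) = c * x ^ n"
  proof -
    have "(\<Sum>i\<le>n. (if i = n then c else 0) * x ^ i) = (\<Sum>i\<le>n. (if i = n then c * x ^ i else 0))"
      by (rule sum.cong) auto
    also have "\<dots> = c * x ^ n" by (subst sum.delta) auto
    finally show ?thesis .
  qed
  thus ?thesis using assms by (intro EpolyI[of "\<lambda>i. if i = n then c else 0"]) auto
qed

lemma Epoly_inv:
  assumes "submod W I" "x \<noteq> 0" "y \<in> Epoly I (inverse x) k"
  shows "x ^ k * y \<in> Epoly I x k"
  using assms(3)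
proof (induction k arbitrary: y)
  case 0 thus ?case by (simp add: Epoly_0)
next
  case (Suc k)
  have I0: "0 \<in> I" using submodD(1)[OF assms(1)] .
  obtain c e where ce: "c \<in> I" "e \<in> Epoly I (inverse x) k" "y = c + inverse x * e"
    using Epoly_bot[OF Suc.prems] by blast
  have "x ^ Suc k * y = c * x ^ Suc k + x ^ k * e" using assms(2) unfolding ce(3)
    by (simp add: algebra_simps)
  moreover have "c * x ^ Suc k \<in> Epoly I x (Suc k)" by (rule Epoly_monom[OF I0 ce(1)])
  moreover have "x ^ k * e \<in> Epoly I x (Suc k)" using Suc.IH[OF ce(2)] Epoly_mono_Suc[OF I0] by blast
  ultimately show ?case using Epoly_add[OF assms(1)] by metis
qed

lemma Epoly_in_I:
  assumes "submod W I" "subring W" "z \<in> W" shows "Epoly I z k \<subseteq> I"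
proof
  fix y assume "y \<in> Epoly I z k"
  then obtain a where a: "\<And>i. a i \<in> I" "y = (\<Sum>i\<le>k. a i * z ^ i)" using EpolyD by blast
  have "\<And>i. a i * z ^ i \<in> I" using submodD(3)[OF assms(1) subring_power[OF assms(2,3)] a(1)]
    by (simp add: mult.commute)
  thus "y \<in> I" unfolding a(2) by (rule submod_sum[OF assms(1)])
qed

definition adj :: "'a::field set \<Rightarrow> 'a \<Rightarrow> 'a set" where
  "adj W x = \<Inter>{R. subring R \<and> W \<subseteq> R \<and> x \<in> R}"

lemma subring_Inter: "(\<And>R. R \<in> \<R> \<Longrightarrow> subring R) \<Longrightarrow> subring (\<Inter>\<R>)"
  unfolding subring_def by blast

lemma adj_subring: "subring (adj W x)"
  unfolding adj_def by (rule subring_Inter) blast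

lemma adj_sup: "W \<subseteq> adj W x" "x \<in> adj W x"
  unfolding adj_def by blast+

lemma adj_least: "subring R \<Longrightarrow> W \<subseteq> R \<Longrightarrow> x \<in> R \<Longrightarrow> adj W x \<subseteq> R"
  unfolding adj_def by blast

definition EP :: "'a::field set \<Rightarrow> 'a \<Rightarrow> 'a set" where
  "EP I x = (\<Union>k. Epoly I x k)"

lemma EP_add:
  assumes "submod W I" "y \<in> EP I x" "z \<in> EP I x" shows "y + z \<in> EP I x"
proof -
  have I0: "0 \<in> I" using submodD(1)[OF assms(1)] .
  obtain k1 k2 where "y \<in> Epoly I x k1" "z \<in> Epoly I x k2" using assms(2,3) unfolding EP_def by blast
  hence "y \<in> Epoly I x (max k1 k2)" "z \<in> Epoly I x (max k1 k2)" using Epoly_mono[OF I0] by (meson max.cobounded1 max.cobounded2 subsetD)+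
  thus ?thesis using Epoly_add[OF assms(1)] unfolding EP_def by blast
qed

lemma EP_submod:
  assumes W: "subring W" and I: "submod W I"
  shows "submod (adj W x) (EP I x)"
proof -
  have I0: "0 \<in> I" using submodD(1)[OF I] .
  have z: "0 \<in> EP I x" using Epoly_0 I0 unfolding EP_def by blast
  define Rm where "Rm = {r. \<forall>e\<in>EP I x. r * e \<in> EP I x}"
  have "subring Rm" unfolding subring_def
  proof (intro conjI ballI)
    show "0 \<in> Rm" unfolding Rm_def using z by simp
    show "1 \<in> Rm" unfolding Rm_def by simp
  next
    fix r s assume r: "r \<in> Rm" and s: "s \<in> Rm"
    show "r + s \<in> Rm" unfolding Rm_def
    proof (intro CollectI ballI)
      fix e assume e: "e \<in> EP I x"
      have "r * e \<in> EP I x" "s * e \<in> EP I x" using r s e unfolding Rm_def by blast+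
      thus "(r + s) * e \<in> EP I x" using EP_add[OF I] by (simp add: distrib_right)
    qed
    show "- r \<in> Rm" unfolding Rm_def
    proof (intro CollectI ballI)
      fix e assume e: "e \<in> EP I x"
      have "r * e \<in> EP I x" using r e unfolding Rm_def by blast
      then obtain k where "r * e \<in> Epoly I x k" unfolding EP_def by blast
      hence "- (r * e) \<in> Epoly I x k" by (rule Epoly_neg[OF I W])
      thus "- r * e \<in> EP I x" unfolding EP_def by auto
    qed
    show "r * s \<in> Rm" unfolding Rm_def
    proof (intro CollectI ballI)
      fix e assume e: "e \<in> EP I x"
      have "s * e \<in> EP I x" using s e unfolding Rm_def by blast
      hence "r * (s * e) \<in> EP I x" using r unfolding Rm_def by blast
      thus "r * s * e \<in> EP I x" by (simp add: mult.assoc)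
    qed
  qed
  moreover have "W \<subseteq> Rm" unfolding Rm_def EP_def using Epoly_scale[OF I] by blast
  moreover have "x \<in> Rm" unfolding Rm_def EP_def using Epoly_shift[OF I0] by blast
  ultimately have adjR: "adj W x \<subseteq> Rm" by (rule adj_least)
  show ?thesis unfolding submod_def
  proof (intro conjI ballI)
    show "0 \<in> EP I x" by (rule z)
    show "\<And>y z. y \<in> EP I x \<Longrightarrow> z \<in> EP I x \<Longrightarrow> y + z \<in> EP I x" using EP_add[OF I] by blast
    show "\<And>r y. r \<in> adj W x \<Longrightarrow> y \<in> EP I x \<Longrightarrow> r * y \<in> EP I x" using adjR unfolding Rm_def by blast
  qed
qed

lemma one_minus_power_in:
  assumes "subring W" "submod W I" "I \<subseteq> W" "y \<in> I" shows "1 - (1 - y) ^ n \<in> I"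
proof (induction n)
  case 0 thus ?case using submodD(1)[OF assms(2)] by simp
next
  case (Suc n)
  have "1 - y \<in> W" using subringD(2,6)[OF assms(1)] assms(3,4) by blast
  hence "(1 - y) ^ n \<in> W" using subring_power[OF assms(1)] by blast
  hence "(1 - y) ^ n * y \<in> I" using submodD(3)[OF assms(2) _ assms(4)] by blast
  moreover have "1 - (1 - y) ^ Suc n = (1 - (1 - y) ^ n) + (1 - y) ^ n * y" by (simp add: algebra_simps)
  ultimately show ?case using submodD(2)[OF assms(2) Suc.IH] by metis
qed



definition primeI :: "'a::field set \<Rightarrow> 'a set \<Rightarrow> bool" where
  "primeI D P \<longleftrightarrow> ideal_of D P \<and> P \<noteq> D \<and> (\<forall>a\<in>D. \<forall>b\<in>D. a * b \<in> P \<longrightarrow> a \<in> P \<or> b \<in> P)"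

lemma locI: "a \<in> R \<Longrightarrow> s \<in> S \<Longrightarrow> a / s \<in> loc R S"
  unfolding loc_def by blast

lemma locD: "x \<in> loc R S \<Longrightarrow> \<exists>a s. a \<in> R \<and> s \<in> S \<and> x = a / s"
  unfolding loc_def by blast

context
  fixes D P0 :: "'a::field set"
  assumes D: "subring D" and P: "primeI D P0"
begin

lemma P_ideal: "ideal_of D P0" and P_ne: "P0 \<noteq> D"
  and P_prime: "a \<in> D \<Longrightarrow> b \<in> D \<Longrightarrow> a * b \<in> P0 \<Longrightarrow> a \<in> P0 \<or> b \<in> P0"
  using P unfolding primeI_def by auto

lemma P_sub: "P0 \<subseteq> D" and P_submod: "submod D P0"
  using P_ideal ideal_ofD by auto

lemma P_zero: "0 \<in> P0" using submodD(1)[OF P_submod] .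

lemma P_one: "1 \<notin> P0"
proof
  assume "1 \<in> P0"
  hence "D \<subseteq> P0" using submod_contains_ring[OF P_submod] by blast
  thus False using P_sub P_ne by blast
qed

lemma S_nz: "s \<in> D - P0 \<Longrightarrow> s \<noteq> 0" using P_zero by auto

lemma S_mult: "s \<in> D - P0 \<Longrightarrow> t \<in> D - P0 \<Longrightarrow> s * t \<in> D - P0"
  using P_prime subringD(5)[OF D] by blast

lemma S_one: "1 \<in> D - P0" using P_one subringD(2)[OF D] by blast

lemma loc_subring: "subring (loc D (D - P0))"
  unfolding subring_def
proof (intro conjI ballI)
  show "0 \<in> loc D (D - P0)" using locI[OF subringD(1)[OF D] S_one] by simp
  show "1 \<in> loc D (D - P0)" using locI[OF subringD(2)[OF D] S_one] by simp
next
  fix x y assume x: "x \<in> loc D (D - P0)" and y: "y \<in> loc D (D - P0)"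
  obtain a s where as: "a \<in> D" "s \<in> D - P0" "x = a / s" using locD[OF x] by blast
  obtain b t where bt: "b \<in> D" "t \<in> D - P0" "y = b / t" using locD[OF y] by blast
  have s0: "s \<noteq> 0" and t0: "t \<noteq> 0" using S_nz as bt by auto
  have "x + y = (a * t + b * s) / (s * t)" using s0 t0 as bt by (simp add: field_simps)
  moreover have "a * t + b * s \<in> D" using as bt subringD(3,5)[OF D] by blast
  ultimately show "x + y \<in> loc D (D - P0)" using locI S_mult as(2) bt(2) by metis
  have "- x = (- a) / s" using as by simp
  thus "- x \<in> loc D (D - P0)" using locI subringD(4)[OF D] as by metis
  have "x * y = (a * b) / (s * t)" using as bt by simp
  thus "x * y \<in> loc D (D - P0)" using locI S_mult as bt subringD(5)[OF D] by metis
qed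

lemma D_sub_loc: "D \<subseteq> loc D (D - P0)"
proof
  fix d assume "d \<in> D" thus "d \<in> loc D (D - P0)" using locI[OF _ S_one, of d D] by simp
qed

lemma inv_in_loc: "s \<in> D - P0 \<Longrightarrow> inverse s \<in> loc D (D - P0)"
  using locI[OF subringD(2)[OF D], of s "D - P0"] by (simp add: divide_inverse)

lemma one_notin_span_loc: "1 \<notin> span (loc D (D - P0)) P0"
proof -
  define E where "E = {a / s | a s. a \<in> P0 \<and> s \<in> D - P0}"
  have "submod (loc D (D - P0)) E" unfolding submod_def
  proof (intro conjI ballI)
    show "0 \<in> E" unfolding E_def using P_zero S_one by force
  next
    fix x y assume "x \<in> E" "y \<in> E"
    then obtain a s b t where ab: "a \<in> P0" "s \<in> D - P0" "x = a / s" "b \<in> P0" "t \<in> D - P0" "y = b / t"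
      unfolding E_def by blast
    have s0: "s \<noteq> 0" and t0: "t \<noteq> 0" using S_nz ab by auto
    have "x + y = (a * t + b * s) / (s * t)" using s0 t0 ab by (simp add: field_simps)
    moreover have "a * t + b * s \<in> P0"
      using ab P_submod submodD(2,3)[OF P_submod] by (metis DiffD1 mult.commute)
    ultimately show "x + y \<in> E" unfolding E_def using S_mult ab(2,5) by blast
  next
    fix r x assume "r \<in> loc D (D - P0)" "x \<in> E"
    then obtain c u a s where ab: "c \<in> D" "u \<in> D - P0" "r = c / u" "a \<in> P0" "s \<in> D - P0" "x = a / s"
      unfolding E_def using locD by blast
    have "r * x = (c * a) / (u * s)" using ab by simp
    moreover have "c * a \<in> P0" using submodD(3)[OF P_submod ab(1,4)] .
    ultimately show "r * x \<in> E" unfolding E_def using S_mult ab(2,5) by blast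
  qed
  moreover have "P0 \<subseteq> E"
  proof
    fix p assume "p \<in> P0" thus "p \<in> E" unfolding E_def using S_one by force
  qed
  ultimately have "span (loc D (D - P0)) P0 \<subseteq> E" by (rule span_least)
  moreover have "1 \<notin> E"
  proof
    assume "1 \<in> E"
    then obtain a s where "a \<in> P0" "s \<in> D - P0" "1 = a / s" unfolding E_def by blast
    moreover hence "s = a" using S_nz by (simp add: field_simps)
    ultimately show False by blast
  qed
  ultimately show ?thesis by blast
qed

end

(* Chevalley: existence of a dominating valuation ring *)

lemma chain_subring:
  assumes "C \<noteq> {}" "\<And>R. R \<in> C \<Longrightarrow> subring R" "\<forall>x\<in>C. \<forall>y\<in>C. x \<subseteq> y \<or> y \<subseteq> x"
  shows "subring (\<Union>C)"
  unfolding subring_def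
proof (intro conjI ballI)
  obtain R0 where R0: "R0 \<in> C" using assms(1) by blast
  show "0 \<in> \<Union>C" "1 \<in> \<Union>C" using R0 subringD(1,2)[OF assms(2)[OF R0]] by blast+
next
  fix x y assume "x \<in> \<Union>C" "y \<in> \<Union>C"
  then obtain R1 R2 where "R1 \<in> C" "R2 \<in> C" "x \<in> R1" "y \<in> R2" by blast
  hence "\<exists>R\<in>C. x \<in> R \<and> y \<in> R" using assms(3) by blast
  then obtain R where R: "R \<in> C" "x \<in> R" "y \<in> R" by blast
  show "x + y \<in> \<Union>C" using R subringD(3)[OF assms(2)[OF R(1)]] by blast
  show "- x \<in> \<Union>C" using R subringD(4)[OF assms(2)[OF R(1)]] by blast
  show "x * y \<in> \<Union>C" using R subringD(5)[OF assms(2)[OF R(1)]] by blast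
qed

lemma chain_span:
  assumes "C \<noteq> {}" "\<forall>x\<in>C. \<forall>y\<in>C. x \<subseteq> y \<or> y \<subseteq> x"
  shows "span (\<Union>C) P \<subseteq> (\<Union>R\<in>C. span R P)"
proof (rule span_least)
  obtain R0 where R0: "R0 \<in> C" using assms(1) by blast
  show "P \<subseteq> (\<Union>R\<in>C. span R P)" using R0 span_sub[of P R0] by blast
  show "submod (\<Union>C) (\<Union>R\<in>C. span R P)" unfolding submod_def
  proof (intro conjI ballI)
    show "0 \<in> (\<Union>R\<in>C. span R P)" using R0 submodD(1)[OF submod_span[of R0 P]] by blast
  next
    fix x y assume "x \<in> (\<Union>R\<in>C. span R P)" "y \<in> (\<Union>R\<in>C. span R P)"
    then obtain R1 R2 where R12: "R1 \<in> C" "R2 \<in> C" "x \<in> span R1 P" "y \<in> span R2 P" by blast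
    have "\<exists>R\<in>C. x \<in> span R P \<and> y \<in> span R P"
    proof (cases "R1 \<subseteq> R2")
      case True show ?thesis using span_mono_ring[OF True, of P] R12 by blast
    next
      case False hence sub: "R2 \<subseteq> R1" using assms(2) R12 by blast
      show ?thesis using span_mono_ring[OF sub, of P] R12 by blast
    qed
    then obtain R where R: "R \<in> C" "x \<in> span R P" "y \<in> span R P" by blast
    show "x + y \<in> (\<Union>R\<in>C. span R P)" using R(1) submodD(2)[OF submod_span R(2,3)] by blast
  next
    fix r x assume "r \<in> \<Union>C" "x \<in> (\<Union>R\<in>C. span R P)"
    then obtain R1 R2 where R12: "R1 \<in> C" "R2 \<in> C" "r \<in> R1" "x \<in> span R2 P" by blast
    have "\<exists>R\<in>C. r \<in> R \<and> x \<in> span R P"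
    proof (cases "R1 \<subseteq> R2")
      case True show ?thesis using R12 True by blast
    next
      case False hence sub: "R2 \<subseteq> R1" using assms(2) R12 by blast
      show ?thesis using span_mono_ring[OF sub, of P] R12 by blast
    qed
    then obtain R where R: "R \<in> C" "r \<in> R" "x \<in> span R P" by blast
    show "r * x \<in> (\<Union>R\<in>C. span R P)" using R(1) span_mult_in[OF R(3,2)] by blast
  qed
qed



theorem valuation_exists:
  assumes D: "subring D" and P: "primeI D P0"
  shows "\<exists>W. subring W \<and> loc D (D - P0) \<subseteq> W \<and> 1 \<notin> span W P0 \<and> (\<forall>x. x \<noteq> 0 \<longrightarrow> x \<in> W \<or> inverse x \<in> W)"
proof -
  define L where "L = loc D (D - P0)"
  define Sg where "Sg = {R. subring R \<and> L \<subseteq> R \<and> 1 \<notin> span R P0}"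
  have "\<exists>W\<in>Sg. \<forall>X\<in>Sg. W \<subseteq> X \<longrightarrow> X = W"
  proof (rule subset_Zorn_nonempty)
    have "L \<in> Sg" unfolding Sg_def L_def using loc_subring[OF D P] one_notin_span_loc[OF D P] by blast
    thus "Sg \<noteq> {}" by blast
  next
    fix C assume C: "C \<noteq> {}" "subset.chain Sg C"
    hence CS: "C \<subseteq> Sg" and ch: "\<forall>x\<in>C. \<forall>y\<in>C. x \<subseteq> y \<or> y \<subseteq> x" by (auto simp: subset.chain_def)
    have CR: "\<And>R. R \<in> C \<Longrightarrow> subring R \<and> L \<subseteq> R \<and> 1 \<notin> span R P0" using CS unfolding Sg_def by blast
    obtain R0 where R0: "R0 \<in> C" using C(1) by blast
    have "subring (\<Union>C)" using chain_subring[OF C(1) _ ch] CR by blast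
    moreover have "L \<subseteq> \<Union>C" using CR[OF R0] R0 by blast
    moreover have "1 \<notin> span (\<Union>C) P0" using chain_span[OF C(1) ch, of P0] CR by blast
    ultimately show "\<Union>C \<in> Sg" unfolding Sg_def by blast
  qed
  then obtain W where W: "W \<in> Sg" and max: "\<forall>X\<in>Sg. W \<subseteq> X \<longrightarrow> X = W" by blast
  have Wsub: "subring W" and LW: "L \<subseteq> W" and W1: "1 \<notin> span W P0" using W unfolding Sg_def by auto
  define I where "I = span W P0"
  have Isub: "submod W I" unfolding I_def by (rule submod_span)
  have I0: "0 \<in> I" using submodD(1)[OF Isub] .
  have P0W: "P0 \<subseteq> W" using P_sub[OF D P] D_sub_loc[OF D P] LW unfolding L_def by blast
  have IW: "I \<subseteq> W" unfolding I_def by (rule span_least[OF subring_submod[OF Wsub] P0W])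
  have P0I: "P0 \<subseteq> I" unfolding I_def by (rule span_sub)
  have I1: "1 \<notin> I" using W1 unfolding I_def .
  have key: "1 \<in> EP I z" if z: "z \<notin> W" for z
  proof -
    have "adj W z \<notin> Sg"
    proof
      assume "adj W z \<in> Sg"
      hence "adj W z = W" using max adj_sup(1) by blast
      thus False using adj_sup(2)[of z W] z by blast
    qed
    moreover have "subring (adj W z)" by (rule adj_subring)
    moreover have "L \<subseteq> adj W z" using LW adj_sup(1) by blast
    ultimately have "1 \<in> span (adj W z) P0" unfolding Sg_def by blast
    moreover have "P0 \<subseteq> EP I z" unfolding EP_def using P0I Epoly_0 by blast
    hence "span (adj W z) P0 \<subseteq> EP I z" by (rule span_least[OF EP_submod[OF Wsub Isub]])
    ultimately show ?thesis by blast
  qed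
  have local: "inverse (1 - y) \<in> W" if y: "y \<in> I" for y
  proof (rule ccontr)
    assume nz: "inverse (1 - y) \<notin> W"
    have z0: "1 - y \<noteq> 0" using y I1 by auto
    obtain n where n: "1 \<in> Epoly I (inverse (1 - y)) n" using key[OF nz] unfolding EP_def by blast
    have "(1 - y) ^ n * 1 \<in> Epoly I (1 - y) n" using Epoly_inv[OF Isub z0 n] .
    moreover have "1 - y \<in> W" using subringD(2,6)[OF Wsub] IW y by blast
    ultimately have "(1 - y) ^ n \<in> I" using Epoly_in_I[OF Isub Wsub] by auto
    moreover have "1 - (1 - y) ^ n \<in> I" by (rule one_minus_power_in[OF Wsub Isub IW y])
    ultimately have "(1 - y) ^ n + (1 - (1 - y) ^ n) \<in> I" using submodD(2)[OF Isub] by blast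
    thus False using I1 by simp
  qed
  have K: "\<exists>k<n. 1 \<in> Epoly I x k"
    if x0: "x \<noteq> 0" and n: "1 \<in> Epoly I x n" and m: "1 \<in> Epoly I (inverse x) m" and mn: "m \<le> n" for x n m
  proof -
    obtain k where k: "n = Suc k" using n I1 Epoly_0 by (cases n) auto
    obtain l where l: "m = Suc l" using m I1 Epoly_0 by (cases m) auto
    obtain b0 e' where be: "b0 \<in> I" "e' \<in> Epoly I (inverse x) l" "1 = b0 + inverse x * e'"
      using Epoly_bot[of 1 I "inverse x" l] m l by blast
    have u: "inverse (1 - b0) \<in> W" using local[OF be(1)] .
    have b1: "1 - b0 \<noteq> 0" using be(1) I1 by auto
    have "e' \<in> Epoly I (inverse x) k" using be(2) Epoly_mono[OF I0, of l k] mn k l by auto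
    hence xe: "x ^ k * e' \<in> Epoly I x k" by (rule Epoly_inv[OF Isub x0])
    have "1 - b0 = inverse x * e'" using be(3) by (simp add: algebra_simps)
    hence xb: "x * (1 - b0) = e'" using x0 by simp
    have "x ^ Suc k * (1 - b0) = x ^ k * (x * (1 - b0))" by (simp add: mult.assoc)
    hence "x ^ Suc k * (1 - b0) = x ^ k * e'" using xb by simp
    hence "x ^ Suc k = inverse (1 - b0) * (x ^ k * e')" using b1 by (simp add: field_simps)
    hence xs: "x ^ Suc k \<in> Epoly I x k" using Epoly_scale[OF Isub u xe] by (simp only:)
    obtain e c where ec: "e \<in> Epoly I x k" "c \<in> I" "1 = e + c * x ^ Suc k"
      using Epoly_top[of 1 I x k] n k by blast
    have "c * x ^ Suc k \<in> Epoly I x k" using Epoly_scale[OF Isub _ xs] ec(2) IW by blast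
    hence "1 \<in> Epoly I x k" using Epoly_add[OF Isub ec(1)] ec(3) by metis
    thus ?thesis using k by blast
  qed
  have val: "x \<in> W \<or> inverse x \<in> W" if x0: "x \<noteq> 0" for x
  proof (rule ccontr)
    assume "\<not> (x \<in> W \<or> inverse x \<in> W)"
    hence a: "1 \<in> EP I x" "1 \<in> EP I (inverse x)" using key by auto
    define n where "n = (LEAST n. 1 \<in> Epoly I x n)"
    define m where "m = (LEAST m. 1 \<in> Epoly I (inverse x) m)"
    obtain n0 where "1 \<in> Epoly I x n0" using a(1) unfolding EP_def by blast
    hence n: "1 \<in> Epoly I x n" unfolding n_def by (rule LeastI)
    obtain m0 where "1 \<in> Epoly I (inverse x) m0" using a(2) unfolding EP_def by blast
    hence m: "1 \<in> Epoly I (inverse x) m" unfolding m_def by (rule LeastI)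
    show False
    proof (cases "m \<le> n")
      case True
      then obtain k where "k < n" "1 \<in> Epoly I x k" using K[OF x0 n m] by blast
      thus False unfolding n_def using not_less_Least by blast
    next
      case False
      have "inverse x \<noteq> 0" using x0 by simp
      moreover have "1 \<in> Epoly I (inverse (inverse x)) n" using n by simp
      ultimately obtain k where "k < m" "1 \<in> Epoly I (inverse x) k" using K[OF _ m] False by fastforce
      thus False unfolding m_def using not_less_Least by blast
    qed
  qed
  show ?thesis using Wsub LW W1 val unfolding L_def by blast
qed



lemma domain_qfD: "domain_qf D \<Longrightarrow> subring D"
  "domain_qf D \<Longrightarrow> \<exists>a\<in>D. \<exists>b\<in>D. b \<noteq> 0 \<and> x = a / b"
  unfolding domain_qf_def by auto

lemma overringD: "overring D T \<Longrightarrow> subring T" "overring D T \<Longrightarrow> D \<subseteq> T"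
  unfolding overring_def by auto

lemma fgen_ext:
  assumes "D \<subseteq> T" "G \<in> fgen D" shows "span T G \<in> fgen T"
proof -
  obtain S where S: "finite S" "G = span D S" "G \<noteq> {0}" using assms(2) by (rule fgenE)
  have eq: "span T G = span T S" by (rule span_ring_ext[OF assms(1) S(2)])
  obtain x where "x \<in> G" "x \<noteq> 0" using S(3) submodD(1)[OF submod_span] S(2) by blast
  hence "x \<in> span T G" "x \<noteq> 0" using span_sub by blast+
  hence "span T G \<in> Fbar T" unfolding Fbar_iff using submod_span by blast
  thus ?thesis unfolding fgen_def using eq S(1) by blast
qed

lemma quasi_primeD:
  assumes "quasi_prime R st Q"
  shows "ideal_of R Q" "Q \<noteq> {0}" "st Q \<inter> R = Q" "Q \<noteq> R"
    "a \<in> R \<Longrightarrow> b \<in> R \<Longrightarrow> a * b \<in> Q \<Longrightarrow> a \<in> Q \<or> b \<in> Q"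
  using assms unfolding quasi_prime_def quasi_ideal_def by auto

lemma ideal_one: "ideal_of R Q \<Longrightarrow> 1 \<in> Q \<Longrightarrow> Q = R"
  using submod_contains_ring ideal_ofD by blast

lemma colonD: "y \<in> colon R E \<Longrightarrow> e \<in> E \<Longrightarrow> y * e \<in> R"
  unfolding colon_def by blast

lemma fwd:
  assumes Dq: "domain_qf D" and ss: "semistar D st" and PM: "PstarMD D st"
    and T: "overring D T" and lk: "linked D st T st'" and one: "1 \<in> st' T"
  shows "flat D st T st'"
  unfolding flat_def
proof (intro conjI allI impI)
  show "linked D st T st'" by fact
  fix Q assume Qq: "quasi_prime T (star_f T st') Q"
  have D: "subring D" using domain_qfD(1)[OF Dq] .
  have Ts: "subring T" and DT: "D \<subseteq> T" using overringD[OF T] by auto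
  have Qi: "ideal_of T Q" and QT: "Q \<noteq> T" and Qs: "star_f T st' Q \<inter> T = Q"
    and Qp: "\<And>a b. a \<in> T \<Longrightarrow> b \<in> T \<Longrightarrow> a * b \<in> Q \<Longrightarrow> a \<in> Q \<or> b \<in> Q"
    using quasi_primeD[OF Qq] by auto
  have QsubT: "Q \<subseteq> T" and Qsm: "submod T Q" using ideal_ofD[OF Qi] by auto
  have Q1: "1 \<notin> Q" using ideal_one[OF Qi] QT by blast
  have Q0: "0 \<in> Q" using submodD(1)[OF Qsm] .
  define p where "p = Q \<inter> D"
  have psm: "submod D p" unfolding p_def
    by (rule submod_Int[OF submod_mono_ring[OF Qsm DT] subring_submod[OF D]])
  have p0: "0 \<in> p" using psm submodD(1) by blast
  have no_one: "1 \<notin> star_f D st p"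
  proof
    assume "1 \<in> star_f D st p"
    then obtain G where G: "G \<in> fgen D" "G \<subseteq> p" "1 \<in> st G" unfolding star_f_iff by blast
    have GD: "G \<subseteq> D" using G(2) unfolding p_def by blast
    have "st G = st D" using st_eq_of_one[OF ss D fgen_Fbar[OF G(1)] GD G(3)] .
    hence "st' (span T G) = st' T" using lk G(1) GD unfolding linked_def by blast
    hence "1 \<in> st' (span T G)" using one by simp
    moreover have "span T G \<in> fgen T" by (rule fgen_ext[OF DT G(1)])
    moreover have "span T G \<subseteq> Q" using span_least[OF Qsm] G(2) unfolding p_def by blast
    ultimately have "1 \<in> star_f T st' Q" unfolding star_f_iff by blast
    hence "1 \<in> Q" using Qs subringD(2)[OF Ts] by blast
    thus False using Q1 by blast
  qed
  have val: "x \<in> loc D (D - p) \<or> inverse x \<in> loc D (D - p)" if x0: "x \<noteq> 0" for x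
  proof -
    obtain a b where ab: "a \<in> D" "b \<in> D" "b \<noteq> 0" "x = a / b" using domain_qfD(2)[OF Dq, of x] by blast
    have a0: "a \<noteq> 0" using ab x0 by auto
    define F where "F = span D {a, b}"
    have Ff: "F \<in> fgen D" unfolding F_def by (rule fgen_span[of _ a]) (use a0 in auto)
    define J where "J = span D {f * y | f y. f \<in> F \<and> y \<in> colon D F}"
    have "star_f D st J = st D" using PM Ff unfolding PstarMD_def J_def by blast
    hence "1 \<in> star_f D st J" using one_in_st[OF ss D] by simp
    hence notJ: "\<not> J \<subseteq> p" using no_one star_f_mono by blast
    have "\<exists>y\<in>colon D F. a * y \<notin> p \<or> b * y \<notin> p"
    proof (rule ccontr)
      assume "\<not> (\<exists>y\<in>colon D F. a * y \<notin> p \<or> b * y \<notin> p)"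
      hence all: "\<And>y. y \<in> colon D F \<Longrightarrow> a * y \<in> p \<and> b * y \<in> p" by blast
      have "{f * y | f y. f \<in> F \<and> y \<in> colon D F} \<subseteq> p"
      proof
        fix z assume "z \<in> {f * y | f y. f \<in> F \<and> y \<in> colon D F}"
        then obtain f y where fy: "z = f * y" "f \<in> F" "y \<in> colon D F" by blast
        have "submod D {f. f * y \<in> p}" unfolding submod_def
        proof (intro conjI ballI)
          show "0 \<in> {f. f * y \<in> p}" using p0 by simp
          show "\<And>u v. u \<in> {f. f * y \<in> p} \<Longrightarrow> v \<in> {f. f * y \<in> p} \<Longrightarrow> u + v \<in> {f. f * y \<in> p}"
            using submodD(2)[OF psm] by (simp add: distrib_right)
          show "\<And>r u. r \<in> D \<Longrightarrow> u \<in> {f. f * y \<in> p} \<Longrightarrow> r * u \<in> {f. f * y \<in> p}"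
            using submodD(3)[OF psm] by (simp add: mult.assoc)
        qed
        moreover have "{a, b} \<subseteq> {f. f * y \<in> p}" using all[OF fy(3)] by (simp add: mult.commute)
        ultimately have "F \<subseteq> {f. f * y \<in> p}" unfolding F_def by (rule span_least)
        thus "z \<in> p" using fy by blast
      qed
      hence "J \<subseteq> p" unfolding J_def by (rule span_least[OF psm])
      thus False using notJ by blast
    qed
    then obtain y where y: "y \<in> colon D F" "a * y \<notin> p \<or> b * y \<notin> p" by blast
    have "a \<in> F" "b \<in> F" unfolding F_def using span_sub by blast+
    hence ayD: "a * y \<in> D" and byD: "b * y \<in> D" using colonD[OF y(1)] by (simp_all add: mult.commute)
    show ?thesis
    proof (cases "a * y \<notin> p")
      case True
      hence y0: "y \<noteq> 0" using p0 by auto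
      have "inverse x = (b * y) / (a * y)" using ab a0 y0 x0 by (simp add: field_simps)
      thus ?thesis using locI[OF byD, of "a * y" "D - p"] True ayD by auto
    next
      case False
      hence bp: "b * y \<notin> p" using y(2) by blast
      hence y0: "y \<noteq> 0" using p0 by auto
      have "x = (a * y) / (b * y)" using ab y0 by (simp add: field_simps)
      thus ?thesis using locI[OF ayD, of "b * y" "D - p"] bp byD by auto
    qed
  qed
  show "loc D (D - Q \<inter> D) = loc T (T - Q)"
  proof
    show "loc D (D - Q \<inter> D) \<subseteq> loc T (T - Q)"
    proof
      fix z assume "z \<in> loc D (D - Q \<inter> D)"
      then obtain a s where "a \<in> D" "s \<in> D - Q \<inter> D" "z = a / s" using locD by blast
      thus "z \<in> loc T (T - Q)" using DT locI[of a T s "T - Q"] by blast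
    qed
  next
    show "loc T (T - Q) \<subseteq> loc D (D - Q \<inter> D)"
    proof
      fix z assume "z \<in> loc T (T - Q)"
      then obtain t s where ts: "t \<in> T" "s \<in> T - Q" "z = t / s" using locD by blast
      have s0: "s \<noteq> 0" using ts(2) Q0 by auto
      have one_S: "1 \<in> D - p" using subringD(2)[OF D] Q1 unfolding p_def by blast
      show "z \<in> loc D (D - Q \<inter> D)"
      proof (cases "z = 0")
        case True thus ?thesis using locI[OF subringD(1)[OF D] one_S] unfolding p_def by simp
      next
        case False
        hence t0: "t \<noteq> 0" using ts by auto
        from val[OF False] show ?thesis unfolding p_def[symmetric]
        proof
          assume "inverse z \<in> loc D (D - p)"
          then obtain c e where ce: "c \<in> D" "e \<in> D - p" "inverse z = c / e" using locD by blast
          have e0: "e \<noteq> 0" using ce(2) p0 by auto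
          show "z \<in> loc D (D - p)"
          proof (cases "c \<in> p")
            case False
            have "z = e / c" using ce(3) e0 False p0 by (metis divide_inverse_commute inverse_divide inverse_inverse_eq)
            thus ?thesis using locI[of e D c "D - p"] ce False by auto
          next
            case True
            have "inverse z = s / t" using ts by simp
            hence "s / t = c / e" using ce(3) by simp
            hence "s * e = c * t" using t0 e0 by (simp add: frac_eq_eq)
            moreover have "t * c \<in> Q" using submodD(3)[OF Qsm ts(1)] True unfolding p_def by blast
            ultimately have "s * e \<in> Q" by (simp add: mult.commute)
            hence "s \<in> Q \<or> e \<in> Q" using Qp ts(2) ce(2) DT by blast
            thus ?thesis using ts(2) ce(2) unfolding p_def by blast
          qed
        qed
      qed
    qed
  qed
qed



(* Valuation rings and their maximal ideal *)

definition nonunits :: "'a::field set \<Rightarrow> 'a set" where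
  "nonunits W = {w \<in> W. w = 0 \<or> inverse w \<notin> W}"

lemma val_finite_max:
  assumes V: "subring V" and val: "\<forall>x. x \<noteq> 0 \<longrightarrow> x \<in> V \<or> inverse x \<in> V"
    and S: "finite S" "S \<noteq> {}" "0 \<notin> S"
  shows "\<exists>s0\<in>S. \<forall>s\<in>S. s * inverse s0 \<in> V"
  using S
proof (induction S rule: finite_ne_induct)
  case (singleton x) thus ?case using subringD(2)[OF V] by simp
next
  case (insert x S)
  then obtain s0 where s0: "s0 \<in> S" "\<forall>s\<in>S. s * inverse s0 \<in> V" by auto
  have x0: "x \<noteq> 0" and s00: "s0 \<noteq> 0" using insert.prems s0 by auto
  have "x * inverse s0 \<noteq> 0" using x0 s00 by simp
  hence "x * inverse s0 \<in> V \<or> inverse (x * inverse s0) \<in> V" using val by blast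
  thus ?case
  proof
    assume "x * inverse s0 \<in> V" thus ?thesis using s0 by blast
  next
    assume a: "inverse (x * inverse s0) \<in> V"
    have "\<forall>s\<in>insert x S. s * inverse x \<in> V"
    proof
      fix s assume "s \<in> insert x S"
      thus "s * inverse x \<in> V"
      proof
        assume "s = x" thus ?thesis using x0 subringD(2)[OF V] by simp
      next
        assume "s \<in> S"
        hence "(s * inverse s0) * inverse (x * inverse s0) \<in> V" using s0 a subringD(5)[OF V] by blast
        thus ?thesis using s00 by (simp add: field_simps)
      qed
    qed
    thus ?thesis by blast
  qed
qed

context
  fixes W :: "'a::field set"
  assumes W: "subring W" and val: "\<forall>x. x \<noteq> 0 \<longrightarrow> x \<in> W \<or> inverse x \<in> W"
begin

lemma nu_ideal: "ideal_of W (nonunits W)"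
  unfolding ideal_of_def
proof
  show "nonunits W \<subseteq> W" unfolding nonunits_def by blast
  show "submod W (nonunits W)" unfolding submod_def
  proof (intro conjI ballI)
    show "0 \<in> nonunits W" unfolding nonunits_def using subringD(1)[OF W] by blast
  next
    fix x y assume x: "x \<in> nonunits W" and y: "y \<in> nonunits W"
    have xW: "x \<in> W" and yW: "y \<in> W" using x y unfolding nonunits_def by auto
    show "x + y \<in> nonunits W"
    proof (rule ccontr)
      assume "x + y \<notin> nonunits W"
      hence s0: "x + y \<noteq> 0" and si: "inverse (x + y) \<in> W" using subringD(3)[OF W xW yW] unfolding nonunits_def by auto
      show False
      proof (cases "x = 0 \<or> y = 0")
        case True thus False using x y s0 si unfolding nonunits_def by auto
      next
        case False
        hence x0: "x \<noteq> 0" and y0: "y \<noteq> 0" by auto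
        have xi: "inverse x \<notin> W" and yi: "inverse y \<notin> W" using x y x0 y0 unfolding nonunits_def by auto
        have "y * inverse x \<noteq> 0" using x0 y0 by simp
        hence "y * inverse x \<in> W \<or> inverse (y * inverse x) \<in> W" using val by blast
        thus False
        proof
          assume a: "y * inverse x \<in> W"
          have "1 + y * inverse x \<in> W" using subringD(2,3)[OF W] a by blast
          hence "(1 + y * inverse x) * inverse (x + y) \<in> W" using si subringD(5)[OF W] by blast
          moreover have "(1 + y * inverse x) * inverse (x + y) = inverse x" using x0 s0 by (simp add: field_simps)
          ultimately show False using xi by simp
        next
          assume a: "inverse (y * inverse x) \<in> W"
          have "1 + inverse (y * inverse x) \<in> W" using subringD(2,3)[OF W] a by blast
          hence "(1 + inverse (y * inverse x)) * inverse (x + y) \<in> W" using si subringD(5)[OF W] by blast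
          moreover have "(1 + inverse (y * inverse x)) * inverse (x + y) = inverse y" using x0 y0 s0 by (simp add: field_simps)
          ultimately show False using yi by simp
        qed
      qed
    qed
  next
    fix r x assume r: "r \<in> W" and x: "x \<in> nonunits W"
    have xW: "x \<in> W" using x unfolding nonunits_def by auto
    show "r * x \<in> nonunits W"
    proof (rule ccontr)
      assume "r * x \<notin> nonunits W"
      hence s0: "r * x \<noteq> 0" and si: "inverse (r * x) \<in> W" using subringD(5)[OF W r xW] unfolding nonunits_def by auto
      have "r * inverse (r * x) \<in> W" using subringD(5)[OF W r si] .
      moreover have "r * inverse (r * x) = inverse x" using s0 by (simp add: field_simps)
      ultimately have "inverse x \<in> W" by metis
      moreover have "x \<noteq> 0" using s0 by auto
      ultimately show False using x unfolding nonunits_def by auto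
    qed
  qed
qed

lemma nu_one: "1 \<notin> nonunits W" unfolding nonunits_def using subringD(2)[OF W] by simp

lemma nu_prime: "a \<in> W \<Longrightarrow> b \<in> W \<Longrightarrow> a * b \<in> nonunits W \<Longrightarrow> a \<in> nonunits W \<or> b \<in> nonunits W"
proof (rule ccontr)
  assume ab: "a \<in> W" "b \<in> W" "a * b \<in> nonunits W" "\<not> (a \<in> nonunits W \<or> b \<in> nonunits W)"
  hence "a \<noteq> 0" "b \<noteq> 0" "inverse a \<in> W" "inverse b \<in> W" unfolding nonunits_def by auto
  hence "inverse (a * b) \<in> W" "a * b \<noteq> 0" using subringD(5)[OF W] by (auto simp: inverse_mult_distrib)
  thus False using ab(3) unfolding nonunits_def by auto
qed

lemma nu_units: "w \<in> W - nonunits W \<Longrightarrow> w \<noteq> 0 \<and> inverse w \<in> W"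
  unfolding nonunits_def by auto

lemma W_sub_loc_nu: "W \<subseteq> loc W (W - nonunits W)"
proof
  fix w assume "w \<in> W" thus "w \<in> loc W (W - nonunits W)"
    using locI[of w W 1 "W - nonunits W"] nu_one subringD(2)[OF W] by auto
qed

lemma fgen_principal:
  assumes "H \<in> fgen W"
  shows "\<exists>s0\<in>H. s0 \<noteq> 0 \<and> (\<forall>h\<in>H. h * inverse s0 \<in> W)"
proof -
  obtain S where S: "finite S" "H = span W S" "H \<noteq> {0}" using assms by (rule fgenE)
  have "S - {0} \<noteq> {}" using S(2,3) span_zero_set[of S W] by blast
  then obtain s0 where s0: "s0 \<in> S - {0}" "\<forall>s\<in>S - {0}. s * inverse s0 \<in> W"
    using val_finite_max[OF W val, of "S - {0}"] S(1) by blast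
  have "submod W {h. h * inverse s0 \<in> W}" unfolding submod_def
  proof (intro conjI ballI)
    show "0 \<in> {h. h * inverse s0 \<in> W}" using subringD(1)[OF W] by simp
    show "\<And>x y. x \<in> {h. h * inverse s0 \<in> W} \<Longrightarrow> y \<in> {h. h * inverse s0 \<in> W} \<Longrightarrow> x + y \<in> {h. h * inverse s0 \<in> W}"
      using subringD(3)[OF W] by (simp add: distrib_right)
    show "\<And>r x. r \<in> W \<Longrightarrow> x \<in> {h. h * inverse s0 \<in> W} \<Longrightarrow> r * x \<in> {h. h * inverse s0 \<in> W}"
      using subringD(5)[OF W] by (simp add: mult.assoc)
  qed
  moreover have "S \<subseteq> {h. h * inverse s0 \<in> W}" using s0(2) subringD(1)[OF W] by auto
  ultimately have "H \<subseteq> {h. h * inverse s0 \<in> W}" unfolding S(2) by (rule span_least)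
  moreover have "s0 \<in> H" using s0(1) S(2) span_sub by blast
  ultimately show ?thesis using s0(1) by blast
qed

lemma quasi_generic:
  assumes ext: "\<And>G. G \<in> fgen W \<Longrightarrow> G \<subseteq> st' G"
    and small: "\<And>G. G \<in> fgen W \<Longrightarrow> G \<subseteq> nonunits W \<Longrightarrow> st' G \<inter> W \<subseteq> nonunits W"
    and nz: "q0 \<in> nonunits W" "q0 \<noteq> 0"
  shows "quasi_prime W (star_f W st') (nonunits W)"
proof -
  have sm: "submod W (nonunits W)" using nu_ideal ideal_ofD by blast
  have "star_f W st' (nonunits W) \<inter> W = nonunits W"
  proof
    show "star_f W st' (nonunits W) \<inter> W \<subseteq> nonunits W"
      unfolding star_f_def using small by blast
    show "nonunits W \<subseteq> star_f W st' (nonunits W) \<inter> W"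
    proof
      fix q assume q: "q \<in> nonunits W"
      define g where "g = (if q = 0 then q0 else q)"
      have g0: "g \<noteq> 0" "g \<in> nonunits W" using nz q unfolding g_def by auto
      have G: "span W {g} \<in> fgen W" using fgen_single[OF g0(1)] .
      have Gs: "span W {g} \<subseteq> nonunits W" using span_least[OF sm] g0 by blast
      have "q \<in> span W {g}"
      proof (cases "q = 0")
        case True thus ?thesis using submodD(1)[OF submod_span] by simp
      next
        case False thus ?thesis unfolding g_def using span_sub by auto
      qed
      hence "q \<in> st' (span W {g})" using ext[OF G] by blast
      hence "q \<in> star_f W st' (nonunits W)" using G Gs unfolding star_f_iff by blast
      moreover have "q \<in> W" using q unfolding nonunits_def by blast
      ultimately show "q \<in> star_f W st' (nonunits W) \<inter> W" by blast
    qed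
  qed
  thus ?thesis unfolding quasi_prime_def quasi_ideal_def using nu_ideal nu_one nu_prime nz subringD(2)[OF W] by blast
qed

lemma v_ext: "E \<subseteq> v_op R E"
  unfolding v_op_def colon_def by (auto simp: mult.commute)

lemma quasi_t:
  assumes "q0 \<in> nonunits W" "q0 \<noteq> 0"
  shows "quasi_prime W (star_f W (t_op W)) (nonunits W)"
proof (rule quasi_generic[OF _ _ assms])
  fix G assume G: "G \<in> fgen W"
  show "G \<subseteq> t_op W G" unfolding t_op_def star_f_def using G v_ext by blast
next
  fix G assume G: "G \<in> fgen W" "G \<subseteq> nonunits W"
  show "t_op W G \<inter> W \<subseteq> nonunits W"
  proof
    fix x assume x: "x \<in> t_op W G \<inter> W"
    hence "x \<in> star_f W (v_op W) G" unfolding t_op_def by blast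
    then obtain H where H: "H \<in> fgen W" "H \<subseteq> G" "x \<in> v_op W H"
      unfolding star_f_iff by blast
    obtain s0 where s0: "s0 \<in> H" "s0 \<noteq> 0" "\<forall>h\<in>H. h * inverse s0 \<in> W" using fgen_principal[OF H(1)] by blast
    have "inverse s0 \<in> colon W H" unfolding colon_def using s0(3) by (simp add: mult.commute)
    hence "x * inverse s0 \<in> W" using H(3) unfolding v_op_def colon_def by blast
    moreover have "s0 \<in> nonunits W" using s0(1) H(2) G(2) by blast
    ultimately have "(x * inverse s0) * s0 \<in> nonunits W" using submodD(3)[OF ideal_ofD(2)[OF nu_ideal]] by blast
    moreover have "x * inverse s0 * s0 = x" using s0(2) by (simp add: mult.assoc)
    ultimately show "x \<in> nonunits W" by simp
  qed
qed

lemma quasi_d: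
  assumes "q0 \<in> nonunits W" "q0 \<noteq> 0"
  shows "quasi_prime W (star_f W d_op) (nonunits W)"
  by (rule quasi_generic[OF _ _ assms]) (auto simp: d_op_def)

end



lemma quasi_primeI_prime: "quasi_prime D st P \<Longrightarrow> primeI D P"
  unfolding quasi_prime_def quasi_ideal_def primeI_def by blast

lemma F_not_in_P:
  assumes ss: "semistar D st" and D: "subring D" and P: "quasi_prime D (star_f D st) P"
    and F: "F \<in> fgen D" "F \<subseteq> D" "st F = st D"
  shows "\<exists>f\<in>F. f \<notin> P"
proof (rule ccontr)
  assume "\<not> (\<exists>f\<in>F. f \<notin> P)"
  hence FP: "F \<subseteq> P" by blast
  have "1 \<in> st F" using F(3) one_in_st[OF ss D] by simp
  hence "1 \<in> star_f D st P" using F(1) FP unfolding star_f_iff by blast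
  hence "1 \<in> P" using quasi_primeD(3)[OF P] subringD(2)[OF D] by blast
  thus False using ideal_one[OF quasi_primeD(1)[OF P]] quasi_primeD(4)[OF P] by blast
qed

lemma linked_W:
  assumes ss: "semistar D st" and D: "subring D" and P: "quasi_prime D (star_f D st) P"
    and W: "subring W" "loc D (D - P) \<subseteq> W"
  shows "linked D st W st'"
  unfolding linked_def
proof (intro allI impI)
  fix F assume F: "F \<in> fgen D \<and> F \<subseteq> D \<and> st F = st D"
  obtain f where f: "f \<in> F" "f \<notin> P" using F_not_in_P[OF ss D P] F by blast
  have pI: "primeI D P" using quasi_primeI_prime[OF P] .
  have DW: "D \<subseteq> W" using D_sub_loc[OF D pI] W(2) by blast
  have "inverse f \<in> W" using inv_in_loc[OF D pI, of f] f F W(2) by blast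
  moreover have "f \<noteq> 0" using f(2) P_zero[OF D pI] by auto
  ultimately have "inverse f * f \<in> span W F" using span_mult_in span_sub f(1) by blast
  hence "1 \<in> span W F" using \<open>f \<noteq> 0\<close> by simp
  hence "W \<subseteq> span W F" by (rule submod_contains_ring[OF submod_span])
  moreover have "span W F \<subseteq> W" using span_least[OF subring_submod[OF W(1)]] F DW by blast
  ultimately show "st' (span W F) = st' W" by (simp add: subset_antisym)
qed

lemma local_val:
  assumes Dq: "domain_qf D" and ss: "semistar D st" and P: "quasi_prime D (star_f D st) P0"
    and hyp: "\<And>W. subring W \<Longrightarrow> loc D (D - P0) \<subseteq> W \<Longrightarrow> (\<forall>x. x \<noteq> 0 \<longrightarrow> x \<in> W \<or> inverse x \<in> W)
      \<Longrightarrow> P0 \<subseteq> nonunits W \<Longrightarrow> loc D (D - nonunits W \<inter> D) = loc W (W - nonunits W)"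
  shows "x \<noteq> 0 \<Longrightarrow> x \<in> loc D (D - P0) \<or> inverse x \<in> loc D (D - P0)"
proof -
  have D: "subring D" using domain_qfD(1)[OF Dq] .
  have pI: "primeI D P0" using quasi_primeI_prime[OF P] .
  obtain W where W: "subring W" "loc D (D - P0) \<subseteq> W" "1 \<notin> span W P0"
    and val: "\<forall>x. x \<noteq> 0 \<longrightarrow> x \<in> W \<or> inverse x \<in> W"
    using valuation_exists[OF D pI] by blast
  have DW: "D \<subseteq> W" using D_sub_loc[OF D pI] W(2) by blast
  have P0nu: "P0 \<subseteq> nonunits W"
  proof
    fix p assume p: "p \<in> P0"
    have pW: "p \<in> W" using p P_sub[OF D pI] DW by blast
    show "p \<in> nonunits W"
    proof (rule ccontr)
      assume "p \<notin> nonunits W"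
      hence "p \<noteq> 0" "inverse p \<in> W" using pW unfolding nonunits_def by auto
      hence "inverse p * p \<in> span W P0" using span_mult_in span_sub p by blast
      thus False using W(3) \<open>p \<noteq> 0\<close> by simp
    qed
  qed
  have "nonunits W \<inter> D = P0"
  proof
    show "P0 \<subseteq> nonunits W \<inter> D" using P0nu P_sub[OF D pI] by blast
    show "nonunits W \<inter> D \<subseteq> P0"
    proof
      fix d assume d: "d \<in> nonunits W \<inter> D"
      show "d \<in> P0"
      proof (rule ccontr)
        assume "d \<notin> P0"
        hence "d \<in> D - P0" using d by blast
        hence "d \<noteq> 0" "inverse d \<in> W" using S_nz[OF D pI] inv_in_loc[OF D pI] W(2) by blast+
        thus False using d unfolding nonunits_def by auto
      qed
    qed
  qed
  hence eq: "loc D (D - P0) = loc W (W - nonunits W)" using hyp[OF W(1,2) val P0nu] by simp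
  have "loc D (D - P0) = W" using W(2) W_sub_loc_nu[OF W(1) val] eq by blast
  thus "x \<noteq> 0 \<Longrightarrow> x \<in> loc D (D - P0) \<or> inverse x \<in> loc D (D - P0)" using val by simp
qed

lemma common_denom:
  assumes D: "subring D" and M: "1 \<in> M" "\<forall>a\<in>M. \<forall>b\<in>M. a * b \<in> M" "M \<subseteq> D"
    and S: "finite S" "\<forall>s\<in>S. \<exists>d\<in>D. \<exists>c\<in>M. s = d / c" and M0: "0 \<notin> M"
  shows "\<exists>c\<in>M. \<forall>s\<in>S. s * c \<in> D"
  using S
proof (induction S rule: finite_induct)
  case empty thus ?case using M(1) by blast
next
  case (insert x S)
  then obtain c1 where c1: "c1 \<in> M" "\<forall>s\<in>S. s * c1 \<in> D" by auto
  obtain d c2 where dc: "d \<in> D" "c2 \<in> M" "x = d / c2" using insert.prems by blast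
  have c20: "c2 \<noteq> 0" using dc(2) M0 by auto
  have "c1 * c2 \<in> M" using M(2) c1(1) dc(2) by blast
  moreover have "x * (c1 * c2) \<in> D"
  proof -
    have eq: "x * (c1 * c2) = d * c1" using dc(3) c20 by (simp add: field_simps)
    have "c1 \<in> D" using c1(1) M(3) by blast
    hence "d * c1 \<in> D" using subringD(5)[OF D dc(1)] by blast
    thus ?thesis unfolding eq .
  qed
  moreover have "\<forall>s\<in>S. s * (c1 * c2) \<in> D"
  proof
    fix s assume "s \<in> S"
    hence "(s * c1) * c2 \<in> D" using c1(2) subringD(5)[OF D] dc(2) M(3) by blast
    thus "s * (c1 * c2) \<in> D" by (simp add: mult.assoc)
  qed
  ultimately show ?case by blast
qed

lemma colon_span:
  assumes D: "subring D" and "\<forall>s\<in>S. y * s \<in> D"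
  shows "y \<in> colon D (span D S)"
proof -
  have "submod D {e. y * e \<in> D}" unfolding submod_def
  proof (intro conjI ballI)
    show "0 \<in> {e. y * e \<in> D}" using subringD(1)[OF D] by simp
    show "\<And>a b. a \<in> {e. y * e \<in> D} \<Longrightarrow> b \<in> {e. y * e \<in> D} \<Longrightarrow> a + b \<in> {e. y * e \<in> D}"
      using subringD(3)[OF D] by (simp add: distrib_left)
    show "\<And>r a. r \<in> D \<Longrightarrow> a \<in> {e. y * e \<in> D} \<Longrightarrow> r * a \<in> {e. y * e \<in> D}"
      using subringD(5)[OF D] by (simp add: mult.left_commute)
  qed
  hence "span D S \<subseteq> {e. y * e \<in> D}" using span_least assms(2) by blast
  thus ?thesis unfolding colon_def by blast
qed

lemma bwd:
  assumes Dq: "domain_qf D" and ss: "semistar D st"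
    and valall: "\<And>P0 x. quasi_prime D (star_f D st) P0 \<Longrightarrow> x \<noteq> 0 \<Longrightarrow> x \<in> loc D (D - P0) \<or> inverse x \<in> loc D (D - P0)"
  shows "PstarMD D st"
  unfolding PstarMD_def
proof
  fix F assume F: "F \<in> fgen D"
  have D: "subring D" using domain_qfD(1)[OF Dq] .
  obtain S where S: "finite S" "F = span D S" "F \<noteq> {0}" using F by (rule fgenE)
  define J where "J = span D {f * y | f y. f \<in> F \<and> y \<in> colon D F}"
  have JD: "J \<subseteq> D" unfolding J_def
  proof (rule span_least[OF subring_submod[OF D]])
    show "{f * y | f y. f \<in> F \<and> y \<in> colon D F} \<subseteq> D" using colonD by (fastforce simp: mult.commute)
  qed
  show "star_f D st J = st D"
  proof (cases "1 \<in> star_f D st J")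
    case True thus ?thesis using one_star_f_eq[OF ss D JD] by blast
  next
    case False
    obtain f0 where f0: "f0 \<in> S" "f0 \<noteq> 0" using S span_zero_set[of S D] by blast
    have "\<exists>c\<in>D - {0}. \<forall>s\<in>S. s * c \<in> D"
    proof (rule common_denom[OF D])
      show "1 \<in> D - {0}" using subringD(2)[OF D] by simp
      show "\<forall>a\<in>D - {0}. \<forall>b\<in>D - {0}. a * b \<in> D - {0}" using subringD(5)[OF D] by simp
      show "\<forall>s\<in>S. \<exists>d\<in>D. \<exists>c\<in>D - {0}. s = d / c" using domain_qfD(2)[OF Dq] by blast
    qed (use S in auto)
    then obtain c where c: "c \<in> D" "c \<noteq> 0" "\<forall>s\<in>S. s * c \<in> D" by blast
    have "\<forall>s\<in>S. c * s \<in> D" using c(3) by (simp add: mult.commute)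
    hence cF: "c \<in> colon D F" unfolding S(2) by (rule colon_span[OF D])
    have f0F: "f0 \<in> F" using f0 S(2) span_sub by blast
    have "f0 * c \<in> {f * z | f z. f \<in> F \<and> z \<in> colon D F}"
      by (rule CollectI, rule exI[of _ f0], rule exI[of _ c]) (simp add: f0F cF)
    hence j1: "f0 * c \<in> J" unfolding J_def using span_sub[of "{f * z | f z. f \<in> F \<and> z \<in> colon D F}" D] by blast
    have j: "f0 * c \<in> J" "f0 * c \<noteq> 0" using j1 f0(2) c(2) by auto
    have "submod D J" unfolding J_def by (rule submod_span)
    hence Ji: "ideal_of D J" unfolding ideal_of_def using JD by blast
    obtain P0 where P0: "quasi_prime D (star_f D st) P0" "J \<subseteq> P0"
      using exists_quasi_prime[OF D ss Ji j False] by blast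
    have pI: "primeI D P0" using quasi_primeI_prime[OF P0(1)] .
    define V where "V = loc D (D - P0)"
    have V: "subring V" unfolding V_def by (rule loc_subring[OF D pI])
    have val: "\<forall>x. x \<noteq> 0 \<longrightarrow> x \<in> V \<or> inverse x \<in> V" using valall[OF P0(1)] unfolding V_def by blast
    obtain s0 where s0: "s0 \<in> S - {0}" "\<forall>s\<in>S - {0}. s * inverse s0 \<in> V"
      using val_finite_max[OF V val, of "S - {0}"] S(1) f0 by blast
    have "\<exists>e\<in>D - P0. \<forall>s\<in>(\<lambda>s. s * inverse s0) ` (S - {0}). s * e \<in> D"
    proof (rule common_denom[OF D])
      show "1 \<in> D - P0" by (rule S_one[OF D pI])
      show "\<forall>a\<in>D - P0. \<forall>b\<in>D - P0. a * b \<in> D - P0" using S_mult[OF D pI] by blast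
      show "\<forall>s\<in>(\<lambda>s. s * inverse s0) ` (S - {0}). \<exists>d\<in>D. \<exists>c\<in>D - P0. s = d / c"
        using s0(2) unfolding V_def loc_def by blast
      show "0 \<notin> D - P0" using P_zero[OF D pI] by blast
    qed (use S in auto)
    then obtain e where e: "e \<in> D - P0" "\<forall>s\<in>S - {0}. s * inverse s0 * e \<in> D" by blast
    define y where "y = e * inverse s0"
    have "\<forall>s\<in>S. y * s \<in> D"
    proof
      fix s assume "s \<in> S"
      show "y * s \<in> D"
      proof (cases "s = 0")
        case True thus ?thesis using subringD(1)[OF D] by simp
      next
        case False
        hence "s * inverse s0 * e \<in> D" using e(2) \<open>s \<in> S\<close> by blast
        thus ?thesis unfolding y_def by (simp add: ac_simps)
      qed
    qed
    hence yF: "y \<in> colon D F" unfolding S(2) by (rule colon_span[OF D])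
    have s0F: "s0 \<in> F" using s0(1) S(2) span_sub by blast
    have sy: "s0 * y = e" using s0(1) unfolding y_def by simp
    have "s0 * y \<in> {f * z | f z. f \<in> F \<and> z \<in> colon D F}"
      by (rule CollectI, rule exI[of _ s0], rule exI[of _ y]) (simp add: s0F yF)
    hence "s0 * y \<in> J" unfolding J_def using span_sub[of "{f * z | f z. f \<in> F \<and> z \<in> colon D F}" D] by blast
    hence "e \<in> J" using sy by simp
    hence "e \<in> P0" using P0(2) by blast
    thus ?thesis using e(1) by blast
  qed
qed



lemma v_ext': "E \<subseteq> v_op R E"
  unfolding v_op_def colon_def by (auto simp: mult.commute)

lemma ss_d: "semistar T d_op"
  unfolding semistar_def d_op_def by auto

lemma one_ell: assumes "subring T" shows "1 \<in> ell D st T T"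
  unfolding ell_def using span_sub subringD(2)[OF assms] by blast

lemma one_t: assumes T: "subring T" shows "1 \<in> t_op T T"
proof -
  have G: "span T {1} \<in> fgen T" by (rule fgen_single) simp
  have "span T {1} \<subseteq> T" using span_least[OF subring_submod[OF T]] subringD(2)[OF T] by blast
  moreover have "1 \<in> span T {1}" using span_sub[of "{1}" T] by blast
  hence "1 \<in> v_op T (span T {1})" using v_ext'[of "span T {1}" T] by blast
  ultimately have "\<exists>G\<in>fgen T. G \<subseteq> T \<and> 1 \<in> v_op T G" using G by blast
  thus ?thesis unfolding t_op_def star_f_iff .
qed

lemma one_d: assumes "subring T" shows "1 \<in> d_op T"
  unfolding d_op_def using subringD(2)[OF assms] .

lemma linked_ell:
  assumes ss: "semistar D st" and D: "subring D" and T: "overring D T"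
  shows "linked D st T (ell D st T)"
  unfolding linked_def
proof (intro allI impI)
  fix F assume F: "F \<in> fgen D \<and> F \<subseteq> D \<and> st F = st D"
  have Ts: "subring T" and DT: "D \<subseteq> T" using overringD[OF T] by auto
  have "span (loc T (D - P)) (span T F) = span (loc T (D - P)) T"
    if P: "quasi_prime D (star_f D st) P" for P
  proof -
    define R where "R = loc T (D - P)"
    have pI: "primeI D P" using quasi_primeI_prime[OF P] .
    obtain f where f: "f \<in> F" "f \<notin> P" using F_not_in_P[OF ss D P] F by blast
    have fS: "f \<in> D - P" using f F by blast
    have f0: "f \<noteq> 0" using S_nz[OF D pI fS] .
    have TR: "T \<subseteq> R"
    proof
      fix t assume "t \<in> T" thus "t \<in> R" unfolding R_def using locI[of t T 1 "D - P"] S_one[OF D pI] by simp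
    qed
    have invf: "inverse f \<in> R" unfolding R_def using locI[of 1 T f "D - P"] subringD(2)[OF Ts] fS
      by (simp add: divide_inverse)
    have FT: "span T F \<subseteq> T" using span_least[OF subring_submod[OF Ts]] F DT by blast
    have "span R (span T F) \<subseteq> span R T"
      using span_mono[OF FT] .
    moreover have "span R T \<subseteq> span R (span T F)"
    proof (rule span_least[OF submod_span])
      have "f \<in> span R (span T F)" using f(1) span_sub by blast
      hence "inverse f * f \<in> span R (span T F)" using span_mult_in invf by blast
      hence "1 \<in> span R (span T F)" using f0 by simp
      hence "R \<subseteq> span R (span T F)" by (rule submod_contains_ring[OF submod_span])
      thus "T \<subseteq> span R (span T F)" using TR by blast
    qed
    ultimately show ?thesis unfolding R_def by blast
  qed
  thus "ell D st T (span T F) = ell D st T T" unfolding ell_def by (metis (no_types, lifting))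
qed

lemma quasi_ell:
  assumes ss: "semistar D st" and D: "subring D" and P: "quasi_prime D (star_f D st) P0"
    and W: "subring W" "loc D (D - P0) \<subseteq> W" and val: "\<forall>x. x \<noteq> 0 \<longrightarrow> x \<in> W \<or> inverse x \<in> W"
    and q0: "q0 \<in> nonunits W" "q0 \<noteq> 0"
  shows "quasi_prime W (star_f W (ell D st W)) (nonunits W)"
proof (rule quasi_generic[OF W(1) val _ _ q0])
  fix G assume G: "G \<in> fgen W"
  show "G \<subseteq> ell D st W G" unfolding ell_def using span_sub by blast
next
  fix G assume G: "G \<in> fgen W" "G \<subseteq> nonunits W"
  have pI: "primeI D P0" using quasi_primeI_prime[OF P] .
  have LW: "loc W (D - P0) \<subseteq> W"
  proof
    fix z assume "z \<in> loc W (D - P0)"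
    then obtain a s where as: "a \<in> W" "s \<in> D - P0" "z = a / s" using locD by blast
    have "inverse s \<in> W" using inv_in_loc[OF D pI as(2)] W(2) by blast
    hence "a * inverse s \<in> W" using subringD(5)[OF W(1) as(1)] by blast
    thus "z \<in> W" using as(3) by (simp add: divide_inverse)
  qed
  have Gs: "submod W G" using G(1) unfolding fgen_def Fbar_def by blast
  have "ell D st W G \<subseteq> span (loc W (D - P0)) G" unfolding ell_def using P by blast
  also have "\<dots> \<subseteq> G" by (rule span_least[OF submod_mono_ring[OF Gs LW]]) simp
  finally show "ell D st W G \<inter> W \<subseteq> nonunits W" using G(2) by blast
qed

lemma nz_elem: "P \<noteq> {0} \<Longrightarrow> 0 \<in> P \<Longrightarrow> \<exists>q\<in>P. q \<noteq> 0"
  by blast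



lemma flat_at:
  assumes "flat D st W st'" "quasi_prime W (star_f W st') Q"
  shows "loc D (D - Q \<inter> D) = loc W (W - Q)"
  using assms unfolding flat_def by blast

lemma valall_from:
  fixes D :: "'a::field set"
  assumes Dq: "domain_qf D" and ss: "semistar D st"
    and fl: "\<And>W P0 q0. subring W \<Longrightarrow> quasi_prime D (star_f D st) P0 \<Longrightarrow> loc D (D - P0) \<subseteq> W
       \<Longrightarrow> (\<forall>x. x \<noteq> 0 \<longrightarrow> x \<in> W \<or> inverse x \<in> W) \<Longrightarrow> q0 \<in> nonunits W \<Longrightarrow> q0 \<noteq> 0
       \<Longrightarrow> loc D (D - nonunits W \<inter> D) = loc W (W - nonunits W)"
  shows "PstarMD D st"
proof (rule bwd[OF Dq ss])
  fix P0 and x :: 'a assume P: "quasi_prime D (star_f D st) P0" and x: "x \<noteq> 0"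
  obtain q0 where q0: "q0 \<in> P0" "q0 \<noteq> 0"
    using quasi_primeD(2)[OF P] submodD(1)[OF ideal_ofD(2)[OF quasi_primeD(1)[OF P]]] by blast
  show "x \<in> loc D (D - P0) \<or> inverse x \<in> loc D (D - P0)"
  proof (rule local_val[OF Dq ss P _ x])
    fix W assume W: "subring W" "loc D (D - P0) \<subseteq> W" "\<forall>x. x \<noteq> 0 \<longrightarrow> x \<in> W \<or> inverse x \<in> W"
      "P0 \<subseteq> nonunits W"
    show "loc D (D - nonunits W \<inter> D) = loc W (W - nonunits W)"
      using fl[OF W(1) P W(2) W(3), of q0] q0 W(4) by blast
  qed
qed

theorem theorem5p7:
  fixes D :: "'a::field set" and st :: "'a set \<Rightarrow> 'a set"
  assumes "domain_qf D" and "semistar D st"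
  shows "(PstarMD D st \<longleftrightarrow>
            (\<forall>T st'. overring D T \<and> semistar T st' \<and> linked D st T st' \<longrightarrow> flat D st T st'))
       \<and> (PstarMD D st \<longleftrightarrow> (\<forall>T. overring D T \<longrightarrow> flat D st T (ell D st T)))
       \<and> (PstarMD D st \<longleftrightarrow>
            (\<forall>T. overring D T \<and> linked D st T (t_op T) \<longrightarrow> flat D st T (t_op T)))
       \<and> (PstarMD D st \<longleftrightarrow>
            (\<forall>T. overring D T \<and> linked D st T d_op \<longrightarrow> flat D st T d_op))"
proof -
  note Dq = assms(1) and ss = assms(2)
  have D: "subring D" using domain_qfD(1)[OF Dq] .
  have ovW: "overring D W" if "subring W" "quasi_prime D (star_f D st) P0" "loc D (D - P0) \<subseteq> W" for W P0
    unfolding overring_def using that D_sub_loc[OF D quasi_primeI_prime[OF that(2)]] by blast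
  have A5: "PstarMD D st" if h: "\<forall>T. overring D T \<and> linked D st T d_op \<longrightarrow> flat D st T d_op"
  proof (rule valall_from[OF Dq ss])
    fix W P0 q0 assume a: "subring W" "quasi_prime D (star_f D st) P0" "loc D (D - P0) \<subseteq> W"
      "\<forall>x. x \<noteq> 0 \<longrightarrow> x \<in> W \<or> inverse x \<in> W" "q0 \<in> nonunits W" "q0 \<noteq> 0"
    have "flat D st W d_op" using h ovW[OF a(1-3)] linked_W[OF ss D a(2) a(1) a(3)] by blast
    thus "loc D (D - nonunits W \<inter> D) = loc W (W - nonunits W)"
      using flat_at quasi_d[OF a(1) a(4) a(5) a(6)] by blast
  qed
  have A4: "PstarMD D st" if h: "\<forall>T. overring D T \<and> linked D st T (t_op T) \<longrightarrow> flat D st T (t_op T)"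
  proof (rule valall_from[OF Dq ss])
    fix W P0 q0 assume a: "subring W" "quasi_prime D (star_f D st) P0" "loc D (D - P0) \<subseteq> W"
      "\<forall>x. x \<noteq> 0 \<longrightarrow> x \<in> W \<or> inverse x \<in> W" "q0 \<in> nonunits W" "q0 \<noteq> 0"
    have "flat D st W (t_op W)" using h ovW[OF a(1-3)] linked_W[OF ss D a(2) a(1) a(3)] by blast
    thus "loc D (D - nonunits W \<inter> D) = loc W (W - nonunits W)"
      using flat_at quasi_t[OF a(1) a(4) a(5) a(6)] by blast
  qed
  have A3: "PstarMD D st" if h: "\<forall>T. overring D T \<longrightarrow> flat D st T (ell D st T)"
  proof (rule valall_from[OF Dq ss])
    fix W P0 q0 assume a: "subring W" "quasi_prime D (star_f D st) P0" "loc D (D - P0) \<subseteq> W"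
      "\<forall>x. x \<noteq> 0 \<longrightarrow> x \<in> W \<or> inverse x \<in> W" "q0 \<in> nonunits W" "q0 \<noteq> 0"
    have "flat D st W (ell D st W)" using h ovW[OF a(1-3)] by blast
    thus "loc D (D - nonunits W \<inter> D) = loc W (W - nonunits W)"
      using flat_at quasi_ell[OF ss D a(2) a(1) a(3) a(4) a(5) a(6)] by blast
  qed
  have F2: "\<forall>T st'. overring D T \<and> semistar T st' \<and> linked D st T st' \<longrightarrow> flat D st T st'"
    if PM: "PstarMD D st"
  proof (intro allI impI)
    fix T st' assume a: "overring D T \<and> semistar T st' \<and> linked D st T st'"
    have "1 \<in> st' T" using one_in_st a overringD(1) by blast
    thus "flat D st T st'" using fwd[OF Dq ss PM] a by blast
  qed
  have F3: "\<forall>T. overring D T \<longrightarrow> flat D st T (ell D st T)" if PM: "PstarMD D st"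
  proof (intro allI impI)
    fix T assume a: "overring D T"
    show "flat D st T (ell D st T)"
      using fwd[OF Dq ss PM a linked_ell[OF ss D a] one_ell[OF overringD(1)[OF a]]] .
  qed
  have F4: "\<forall>T. overring D T \<and> linked D st T (t_op T) \<longrightarrow> flat D st T (t_op T)" if PM: "PstarMD D st"
  proof (intro allI impI)
    fix T assume a: "overring D T \<and> linked D st T (t_op T)"
    show "flat D st T (t_op T)" using fwd[OF Dq ss PM] a one_t overringD(1) by blast
  qed
  have F5: "\<forall>T. overring D T \<and> linked D st T d_op \<longrightarrow> flat D st T d_op" if PM: "PstarMD D st"
  proof (intro allI impI)
    fix T assume a: "overring D T \<and> linked D st T d_op"
    show "flat D st T d_op" using fwd[OF Dq ss PM] a one_d overringD(1) by blast
  qed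
  have A2: "PstarMD D st" if h: "\<forall>T st'. overring D T \<and> semistar T st' \<and> linked D st T st' \<longrightarrow> flat D st T st'"
    using A5 h ss_d by blast
  show ?thesis using A2 A3 A4 A5 F2 F3 F4 F5 by blast
qed


end
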